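(* There exists an absolute constant $C>0$ such that the following holds. Let $n\ge1$, let $S=\{\tau_1,\dots,\tau_{|S|}\}\subset[0,1)$ be finite with minimum separation $\Delta$ satisfying $\Delta\ge C\,\lambda_c\log|S|$, where $\lambda_c=1/n$, and consider the measure $\mu=\sum_{\tau\in S}\delta_\tau$. Then the $2|S|\times2|S|$ matrix $$\begin{pmatrix} D_0 & \frac{1}{\sqrt{|D_N''(0)|}}D_1\\[2pt] -\frac{1}{\sqrt{|D_N''(0)|}}D_1 & -\frac{1}{|D_N''(0)|}D_2\end{pmatrix}$$ is invertible, so that there are unique $a,b\in\mathbb{C}^{|S|}$ with $$\begin{pmatrix} D_0 & \frac{1}{\sqrt{|D_N''(0)|}}D_1\\ -\frac{1}{\sqrt{|D_N''(0)|}}D_1 & -\frac{1}{|D_N''(0)|}D_2\end{pmatrix}\begin{pmatrix} a\\ b\sqrt{|D_N''(0)|}\end{pmatrix}=\begin{pmatrix} v\\ 0\end{pmatrix},\qquad v=(1,\dots,1)^T,$$ and the trigonometric polynomial $\eta(\theta)=\sum_{k}a_k D_N(\theta-\tau_k)+\sum_k b_k D_N'(\theta-\tau_k)$ satisfies $|\eta(\theta)|\le1$ for all $\theta\in[0,1]$ and $\eta(\tau)=1$ for every $\tau\in S$.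
   Context: $D_N(\theta)=\frac{1}{2n+1}\sum_{k=-n}^{n}e^{2\pi i k\theta}$ is the normalized Dirichlet kernel, with derivatives $D_N',D_N''$. $(D_0)_{jk}=D_N(\tau_j-\tau_k)$, $(D_1)_{jk}=D_N'(\tau_j-\tau_k)$, $(D_2)_{jk}=D_N''(\tau_j-\tau_k)$. For $x\in\mathbb{R}$, $|x|_{\mathrm{mod}\,1}=\min_{m\in\mathbb{Z}}|x-m|$; $\Delta=\min_{\tau\neq\tau'\in S}|\tau-\tau'|_{\mathrm{mod}\,1}$ (with $\Delta=+\infty$ if $|S|=1$). The paper's hypothesis "$\Delta\gtrsim\lambda_c\log(S)$" is rendered as $\Delta\ge C\lambda_c\log|S|$ for an absolute constant $C$. *)

theory Defs
  imports "HOL-Analysis.Analysis" "Jordan_Normal_Form.Matrix"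
begin

definition dirichlet :: "nat \<Rightarrow> real \<Rightarrow> complex" where
  "dirichlet n \<theta> = (1 / of_nat (2 * n + 1)) *
     (\<Sum>k\<in>{-int n..int n}. exp (2 * of_real pi * \<i> * of_int k * of_real \<theta>))"

definition dirichlet1 :: "nat \<Rightarrow> real \<Rightarrow> complex" where
  "dirichlet1 n \<theta> = vector_derivative (dirichlet n) (at \<theta>)"

definition dirichlet2 :: "nat \<Rightarrow> real \<Rightarrow> complex" where
  "dirichlet2 n \<theta> = vector_derivative (dirichlet1 n) (at \<theta>)"

definition abs_mod1 :: "real \<Rightarrow> real" where
  "abs_mod1 x = Inf {\<bar>x - of_int m\<bar> | m. True}"

definition kmat :: "(real \<Rightarrow> complex) \<Rightarrow> nat \<Rightarrow> (nat \<Rightarrow> real) \<Rightarrow> complex mat" where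
  "kmat f m \<tau> = mat m m (\<lambda>(j, k). f (\<tau> j - \<tau> k))"

end

theory Submission
  imports Defs "Jordan_Normal_Form.Determinant"
begin

definition R0 :: "nat \<Rightarrow> real \<Rightarrow> real" where
  "R0 n x = (1 + 2 * (\<Sum>k=1..n. cos (2*pi*real k*x))) / real (2*n+1)"
definition R1 :: "nat \<Rightarrow> real \<Rightarrow> real" where
  "R1 n x = - (2 * (\<Sum>k=1..n. (2*pi*real k) * sin (2*pi*real k*x))) / real (2*n+1)"
definition R2 :: "nat \<Rightarrow> real \<Rightarrow> real" where
  "R2 n x = - (2 * (\<Sum>k=1..n. (2*pi*real k)^2 * cos (2*pi*real k*x))) / real (2*n+1)"
definition R3 :: "nat \<Rightarrow> real \<Rightarrow> real" where
  "R3 n x = (2 * (\<Sum>k=1..n. (2*pi*real k)^3 * sin (2*pi*real k*x))) / real (2*n+1)"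

lemma R0_deriv: "(R0 n has_real_derivative R1 n x) (at x)"
proof -
  have "((\<lambda>x. 1 + 2 * (\<Sum>k=1..n. cos (2*pi*real k*x))) has_real_derivative
        - (2 * (\<Sum>k=1..n. (2*pi*real k) * sin (2*pi*real k*x)))) (at x)"
    by (auto intro!: derivative_eq_intros simp: sum_negf sum_distrib_left algebra_simps)
  from DERIV_cdivide[OF this, of "real (2*n+1)"] show ?thesis
    unfolding R0_def[abs_def] R1_def by simp
qed

lemma R1_deriv: "(R1 n has_real_derivative R2 n x) (at x)"
proof -
  have "((\<lambda>x. - (2 * (\<Sum>k=1..n. (2*pi*real k) * sin (2*pi*real k*x)))) has_real_derivative
        - (2 * (\<Sum>k=1..n. (2*pi*real k)^2 * cos (2*pi*real k*x)))) (at x)"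
    by (auto intro!: derivative_eq_intros simp: sum_negf sum_distrib_left algebra_simps power2_eq_square)
  from DERIV_cdivide[OF this, of "real (2*n+1)"] show ?thesis
    unfolding R1_def[abs_def] R2_def by simp
qed

lemma R2_deriv: "(R2 n has_real_derivative R3 n x) (at x)"
proof -
  have "((\<lambda>x. - (2 * (\<Sum>k=1..n. (2*pi*real k)^2 * cos (2*pi*real k*x)))) has_real_derivative
        (2 * (\<Sum>k=1..n. (2*pi*real k)^3 * sin (2*pi*real k*x)))) (at x)"
    by (auto intro!: derivative_eq_intros simp: sum_negf sum_distrib_left algebra_simps power2_eq_square power3_eq_cube)
  from DERIV_cdivide[OF this, of "real (2*n+1)"] show ?thesis
    unfolding R2_def[abs_def] R3_def by simp
qed

lemma exp_sum_cos:
  fixes t :: real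
  shows "(\<Sum>k\<in>{-int n..int n}. exp (\<i> * of_int k * of_real t)) = of_real (1 + 2 * (\<Sum>k=1..n. cos (real k * t)))"
proof (induction n)
  case 0
  then show ?case by simp
next
  case (Suc n)
  have set: "{-int (Suc n)..int (Suc n)} = insert (-int (Suc n)) (insert (int (Suc n)) {-int n..int n})"
    by auto
  have e: "exp (\<i> * of_int (int (Suc n)) * of_real t) + exp (\<i> * of_int (-int (Suc n)) * of_real t)
        = of_real (2 * cos (real (Suc n) * t))"
    by (simp add: cos_exp_eq cos_of_real[symmetric] algebra_simps del: of_nat_Suc)
  show ?case
    unfolding set using e Suc by (simp add: algebra_simps del: of_nat_Suc)
qed

lemma dirichlet_R0: "dirichlet n x = of_real (R0 n x)"
proof -
  have "(\<Sum>k\<in>{-int n..int n}. exp (2 * of_real pi * \<i> * of_int k * of_real x))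
      = (\<Sum>k\<in>{-int n..int n}. exp (\<i> * of_int k * of_real (2*pi*x)))"
    by (intro sum.cong) (auto simp: algebra_simps)
  also have "\<dots> = of_real (1 + 2 * (\<Sum>k=1..n. cos (real k * (2*pi*x))))" by (rule exp_sum_cos)
  finally show ?thesis unfolding dirichlet_def R0_def
    by (simp add: algebra_simps add_divide_distrib)
qed

lemma dirichlet_eq: "dirichlet n = (\<lambda>x. of_real (R0 n x))"
  using dirichlet_R0 by auto

lemma dirichlet1_R1: "dirichlet1 n x = of_real (R1 n x)"
  unfolding dirichlet1_def dirichlet_eq
  by (rule vector_derivative_at) (intro has_vector_derivative_of_real R0_deriv)

lemma dirichlet1_eq: "dirichlet1 n = (\<lambda>x. of_real (R1 n x))"
  using dirichlet1_R1 by auto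

lemma dirichlet2_R2: "dirichlet2 n x = of_real (R2 n x)"
  unfolding dirichlet2_def dirichlet1_eq
  by (rule vector_derivative_at) (intro has_vector_derivative_of_real R1_deriv)


definition cc :: "nat \<Rightarrow> real" where
  "cc n = 2 * (\<Sum>k=1..n. (2*pi*real k)^2) / real (2*n+1)"

lemma sum_sq: "(\<Sum>k=1..n. (real k)^2) = real n * (real n + 1) * (2 * real n + 1) / 6"
  by (induction n) (auto simp: algebra_simps power2_eq_square add_divide_distrib)

lemma cc_eq: "cc n = 4 * pi^2 * real n * (real n + 1) / 3"
proof -
  have "(\<Sum>k=1..n. (2*pi*real k)^2) = 4*pi^2 * (\<Sum>k=1..n. (real k)^2)"
    by (simp add: sum_distrib_left power_mult_distrib)
  then show ?thesis unfolding cc_def sum_sq by (simp add: field_simps)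
qed

lemma cc_ge: "cc n \<ge> 9 * (real n)^2"
proof -
  have p: "pi*pi \<ge> 9" using mult_mono[of 3 pi 3 pi] pi_gt3 by simp
  have "4 * pi^2 * real n * (real n + 1) = (pi*pi) * (4 * real n * (real n + 1))" by (simp add: power2_eq_square)
  also have "\<dots> \<ge> 9 * (4 * real n * (real n + 1))" using p by (intro mult_right_mono) auto
  also have "9 * (4 * real n * (real n + 1)) \<ge> 27 * (real n)^2" by (simp add: power2_eq_square algebra_simps)
  finally have "4 * pi^2 * real n * (real n + 1) \<ge> 27 * (real n)^2" .
  then show ?thesis unfolding cc_eq by simp
qed

lemma cc_nonneg: "cc n \<ge> 0" unfolding cc_def by (auto intro!: sum_nonneg divide_nonneg_nonneg)

lemma sqrt_cc_ge: "sqrt (cc n) \<ge> 3 * real n"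
proof -
  have "sqrt (cc n) \<ge> sqrt (9 * (real n)^2)" using cc_ge by (rule real_sqrt_le_mono)
  also have "sqrt (9 * (real n)^2) = 3 * real n" by (simp add: real_sqrt_mult)
  finally show ?thesis .
qed

lemma R0_0: "R0 n 0 = 1" unfolding R0_def by simp
lemma R1_0: "R1 n 0 = 0" unfolding R1_def by simp
lemma R2_0: "R2 n 0 = - cc n" unfolding R2_def cc_def by simp

lemma cmod_dirichlet2_0: "cmod (dirichlet2 n 0) = cc n"
  unfolding dirichlet2_R2 R2_0 using cc_nonneg by simp

lemma R0_le1: "\<bar>R0 n x\<bar> \<le> 1"
proof -
  have "\<bar>1 + 2 * (\<Sum>k=1..n. cos (2*pi*real k*x))\<bar> \<le> 1 + 2 * (\<Sum>k=1..n. \<bar>cos (2*pi*real k*x)\<bar>)"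
  proof -
    have "\<bar>1 + 2 * (\<Sum>k=1..n. cos (2*pi*real k*x))\<bar> \<le> \<bar>1\<bar> + \<bar>2 * (\<Sum>k=1..n. cos (2*pi*real k*x))\<bar>"
      by (rule abs_triangle_ineq)
    also have "\<dots> \<le> 1 + 2 * (\<Sum>k=1..n. \<bar>cos (2*pi*real k*x)\<bar>)"
      using sum_abs[of "\<lambda>k. cos (2*pi*real k*x)" "{1..n}"] by (simp add: abs_mult)
    finally show ?thesis .
  qed
  also have "\<dots> \<le> 1 + 2 * (\<Sum>k=1..n. 1)" by (intro add_left_mono mult_left_mono sum_mono) auto
  finally show ?thesis unfolding R0_def by (simp add: divide_le_eq_1)
qed

lemma R1_bound: "\<bar>R1 n x\<bar> \<le> 2 * pi * real n"
proof -
  have "\<bar>\<Sum>k=1..n. (2*pi*real k) * sin (2*pi*real k*x)\<bar> \<le> (\<Sum>k=1..n. \<bar>(2*pi*real k) * sin (2*pi*real k*x)\<bar>)"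
    by (rule sum_abs)
  also have "\<dots> \<le> (\<Sum>k=1..n. 2*pi*real k)"
    by (intro sum_mono) (auto simp: abs_mult intro!: mult_left_le)
  also have "\<dots> = 2*pi*(\<Sum>k=1..n. real k)" by (simp add: sum_distrib_left)
  also have "(\<Sum>k=1..n. real k) = real n * (real n + 1) / 2"
    by (induction n) (auto simp: field_simps)
  finally have h: "\<bar>\<Sum>k=1..n. (2*pi*real k) * sin (2*pi*real k*x)\<bar> \<le> pi * real n * (real n + 1)" by simp
  have "\<bar>R1 n x\<bar> = 2 * \<bar>\<Sum>k=1..n. (2*pi*real k) * sin (2*pi*real k*x)\<bar> / real (2*n+1)"
    unfolding R1_def by (simp add: abs_mult)
  also have "\<dots> \<le> 2 * (pi * real n * (real n + 1)) / real (2*n+1)"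
    using h by (intro divide_right_mono) auto
  also have "\<dots> \<le> 2 * pi * real n"
    using pi_gt3 by (simp add: field_simps mult_left_mono)
  finally show ?thesis .
qed

lemma R3_bound: "\<bar>R3 n x\<bar> \<le> 2 * pi * real n * cc n"
proof -
  have "\<bar>\<Sum>k=1..n. (2*pi*real k)^3 * sin (2*pi*real k*x)\<bar> \<le> (\<Sum>k=1..n. \<bar>(2*pi*real k)^3 * sin (2*pi*real k*x)\<bar>)"
    by (rule sum_abs)
  also have "\<dots> \<le> (\<Sum>k=1..n. (2*pi*real n) * (2*pi*real k)^2)"
  proof (intro sum_mono)
    fix k assume k: "k \<in> {1..n}"
    have "\<bar>(2*pi*real k)^3 * sin (2*pi*real k*x)\<bar> \<le> (2*pi*real k)^3"
      by (auto simp: abs_mult intro!: mult_left_le)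
    also have "\<dots> = (2*pi*real k) * (2*pi*real k)^2" by (simp add: power3_eq_cube power2_eq_square)
    also have "\<dots> \<le> (2*pi*real n) * (2*pi*real k)^2" using k by (intro mult_right_mono) auto
    finally show "\<bar>(2*pi*real k)^3 * sin (2*pi*real k*x)\<bar> \<le> (2*pi*real n) * (2*pi*real k)^2" .
  qed
  also have "\<dots> = (2*pi*real n) * (\<Sum>k=1..n. (2*pi*real k)^2)" by (simp add: sum_distrib_left)
  finally have h: "\<bar>\<Sum>k=1..n. (2*pi*real k)^3 * sin (2*pi*real k*x)\<bar> \<le> (2*pi*real n) * (\<Sum>k=1..n. (2*pi*real k)^2)" .
  have "\<bar>R3 n x\<bar> = 2 * \<bar>\<Sum>k=1..n. (2*pi*real k)^3 * sin (2*pi*real k*x)\<bar> / real (2*n+1)"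
    unfolding R3_def by (simp add: abs_mult)
  also have "\<dots> \<le> 2 * ((2*pi*real n) * (\<Sum>k=1..n. (2*pi*real k)^2)) / real (2*n+1)"
    using h by (intro divide_right_mono) auto
  also have "\<dots> = 2 * pi * real n * cc n" unfolding cc_def by simp
  finally show ?thesis .
qed

lemma cos_small:
  assumes "\<bar>x\<bar> \<le> 1 / (4 * real (2*n+1))" "k \<in> {1..n}"
  shows "cos (2*pi*real k*x) \<ge> 1/2"
proof -
  have "\<bar>2*pi*real k*x\<bar> = 2*pi*real k*\<bar>x\<bar>" by (simp add: abs_mult)
  also have "\<dots> \<le> 2*pi*real k * (1 / (4 * real (2*n+1)))"
    using assms by (intro mult_left_mono) auto
  also have "\<dots> = pi * (2 * real k / (4 * real (2*n+1)))" by simp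
  also have "\<dots> \<le> pi * (1/3)"
  proof -
    have "real k \<le> real n" using assms by auto
    then have "2 * real k / (4 * real (2*n+1)) \<le> 1/3" by (simp add: field_simps)
    then show ?thesis using pi_gt_zero by (intro mult_left_mono) auto
  qed
  finally have h: "\<bar>2*pi*real k*x\<bar> \<le> pi / 3" by simp
  have "cos (pi/3) \<le> cos \<bar>2*pi*real k*x\<bar>"
    by (rule cos_monotone_0_pi_le) (use h in auto)
  then show ?thesis by (simp add: cos_60)
qed

lemma R0_small_nonneg:
  assumes "\<bar>x\<bar> \<le> 1 / (4 * real (2*n+1))"
  shows "R0 n x \<ge> 0"
proof -
  have "(\<Sum>k=1..n. cos (2*pi*real k*x)) \<ge> 0"
  proof (intro sum_nonneg)
    fix k assume "k \<in> {1..n}" from cos_small[OF assms this] show "cos (2*pi*real k*x) \<ge> 0" by linarith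
  qed
  then show ?thesis unfolding R0_def by simp
qed

lemma R2_small:
  assumes "\<bar>x\<bar> \<le> 1 / (4 * real (2*n+1))"
  shows "R2 n x \<le> - cc n / 2"
proof -
  have "(\<Sum>k=1..n. (2*pi*real k)^2 * cos (2*pi*real k*x)) \<ge> (\<Sum>k=1..n. (2*pi*real k)^2 * (1/2))"
    using cos_small[OF assms] by (intro sum_mono mult_left_mono) auto
  also have "(\<Sum>k=1..n. (2*pi*real k)^2 * (1/2)) = (\<Sum>k=1..n. (2*pi*real k)^2) / 2"
    by (simp add: sum_divide_distrib)
  finally have h: "(\<Sum>k=1..n. (2*pi*real k)^2) \<le> 2 * (\<Sum>k=1..n. (2*pi*real k)^2 * cos (2*pi*real k*x))"
    by simp
  have "R2 n x = - (2 * (\<Sum>k=1..n. (2*pi*real k)^2 * cos (2*pi*real k*x))) / real (2*n+1)"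
    unfolding R2_def ..
  also have "\<dots> \<le> - (\<Sum>k=1..n. (2*pi*real k)^2) / real (2*n+1)"
    using h by (intro divide_right_mono) auto
  also have "\<dots> = - cc n / 2" unfolding cc_def by (simp add: field_simps)
  finally show ?thesis .
qed



lemma dir_cos_sum:
  fixes t :: real
  shows "2 * sin (t/2) * (\<Sum>k=1..j. cos (real k * t)) = sin ((real j + 1/2) * t) - sin (t/2)"
proof (induction j)
  case 0 then show ?case by simp
next
  case (Suc j)
  have e: "2 * sin (t/2) * cos (real (Suc j) * t) = sin ((real (Suc j) + 1/2) * t) - sin ((real j + 1/2) * t)"
  proof -
    have a: "(real (Suc j) + 1/2) * t = real (Suc j) * t + t/2" by (simp add: algebra_simps)
    have b: "(real j + 1/2) * t = real (Suc j) * t - t/2" by (simp add: algebra_simps)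
    show ?thesis unfolding a b sin_add sin_diff by (simp add: algebra_simps)
  qed
  show ?case using Suc e by (simp add: algebra_simps del: of_nat_Suc)
qed

lemma dir_sin_sum:
  fixes t :: real
  shows "2 * sin (t/2) * (\<Sum>k=1..j. sin (real k * t)) = cos (t/2) - cos ((real j + 1/2) * t)"
proof (induction j)
  case 0 then show ?case by simp
next
  case (Suc j)
  have e: "2 * sin (t/2) * sin (real (Suc j) * t) = cos ((real j + 1/2) * t) - cos ((real (Suc j) + 1/2) * t)"
  proof -
    have a: "(real (Suc j) + 1/2) * t = real (Suc j) * t + t/2" by (simp add: algebra_simps)
    have b: "(real j + 1/2) * t = real (Suc j) * t - t/2" by (simp add: algebra_simps)
    show ?thesis unfolding a b cos_add cos_diff by (simp add: algebra_simps)
  qed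
  show ?case using Suc e by (simp add: algebra_simps del: of_nat_Suc)
qed

lemma cos_psum_bound:
  assumes "sin (t/2) \<noteq> 0"
  shows "\<bar>\<Sum>k=1..j. cos (real k * t)\<bar> \<le> 1 / \<bar>sin (t/2)\<bar>"
proof -
  have "\<bar>2 * sin (t/2)\<bar> * \<bar>\<Sum>k=1..j. cos (real k * t)\<bar> \<le> 2"
    using dir_cos_sum[of t j] abs_sin_le_one[of "(real j + 1/2) * t"] abs_sin_le_one[of "t/2"]
    by (simp only: abs_mult[symmetric])
  then show ?thesis using assms by (simp add: field_simps abs_mult)
qed

lemma sin_psum_bound:
  assumes "sin (t/2) \<noteq> 0"
  shows "\<bar>\<Sum>k=1..j. sin (real k * t)\<bar> \<le> 1 / \<bar>sin (t/2)\<bar>"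
proof -
  have "\<bar>2 * sin (t/2)\<bar> * \<bar>\<Sum>k=1..j. sin (real k * t)\<bar> \<le> 2"
    using dir_sin_sum[of t j] abs_cos_le_one[of "(real j + 1/2) * t"] abs_cos_le_one[of "t/2"]
    by (simp only: abs_mult[symmetric])
  then show ?thesis using assms by (simp add: field_simps abs_mult)
qed

lemma abel_aux:
  fixes a b :: "nat \<Rightarrow> real"
  assumes mono: "\<And>k. a k \<le> a (Suc k)" and B: "\<And>j. j \<le> n \<Longrightarrow> \<bar>\<Sum>k=1..j. b k\<bar> \<le> B"
  shows "\<bar>(\<Sum>k=1..n. a k * b k) - a n * (\<Sum>k=1..n. b k)\<bar> \<le> B * (a n - a 0)"
  using B
proof (induction n)
  case 0 then show ?case by simp
next
  case (Suc n)
  have IH: "\<bar>(\<Sum>k=1..n. a k * b k) - a n * (\<Sum>k=1..n. b k)\<bar> \<le> B * (a n - a 0)"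
    using Suc by auto
  have Sn: "\<bar>\<Sum>k=1..n. b k\<bar> \<le> B" using Suc by auto
  have eq: "(\<Sum>k=1..Suc n. a k * b k) - a (Suc n) * (\<Sum>k=1..Suc n. b k)
     = ((\<Sum>k=1..n. a k * b k) - a n * (\<Sum>k=1..n. b k)) - (a (Suc n) - a n) * (\<Sum>k=1..n. b k)"
    by (simp add: algebra_simps)
  have "\<bar>(a (Suc n) - a n) * (\<Sum>k=1..n. b k)\<bar> \<le> (a (Suc n) - a n) * B"
    using mono[of n] Sn by (simp add: abs_mult mult_left_mono)
  then show ?case unfolding eq using IH by (simp add: algebra_simps)
qed

lemma abel:
  fixes a b :: "nat \<Rightarrow> real"
  assumes mono: "\<And>k. a k \<le> a (Suc k)" and a0: "a 0 \<ge> 0"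
    and B: "\<And>j. j \<le> n \<Longrightarrow> \<bar>\<Sum>k=1..j. b k\<bar> \<le> B"
  shows "\<bar>\<Sum>k=1..n. a k * b k\<bar> \<le> 2 * a n * B"
proof -
  have B0: "B \<ge> 0" using B[of 0] by simp
  have an: "a n \<ge> 0" using a0 mono by (induction n) (auto intro: order_trans)
  have "\<bar>a n * (\<Sum>k=1..n. b k)\<bar> \<le> a n * B" using B[of n] an by (simp add: abs_mult mult_left_mono)
  moreover have "B * (a n - a 0) \<le> B * a n" using B0 a0 by (simp add: mult_left_mono)
  moreover have "\<bar>(\<Sum>k=1..n. a k * b k) - a n * (\<Sum>k=1..n. b k)\<bar> \<le> B * (a n - a 0)"
    by (rule abel_aux[where a=a and b=b]) (use mono B in auto)
  ultimately have "\<bar>\<Sum>k=1..n. a k * b k\<bar> \<le> B * a n + a n * B"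
    by (smt (verit))
  then show ?thesis by (simp add: algebra_simps)
qed


lemma abel_cos:
  assumes "sin (pi * x) \<noteq> 0"
  shows "\<bar>\<Sum>k=1..n. (2*pi*real k)^p * cos (2*pi*real k*x)\<bar> \<le> 2 * (2*pi*real n)^p * (1 / \<bar>sin (pi*x)\<bar>)"
proof -
  have e: "(2*pi*x)/2 = pi*x" by simp
  have "\<bar>\<Sum>k=1..n. (2*pi*real k)^p * cos (real k * (2*pi*x))\<bar> \<le> 2 * (2*pi*real n)^p * (1 / \<bar>sin (pi*x)\<bar>)"
    by (rule abel) (use cos_psum_bound[of "2*pi*x"] assms e in \<open>auto intro!: power_mono\<close>)
  then show ?thesis by (simp add: mult_ac)
qed

lemma abel_sin:
  assumes "sin (pi * x) \<noteq> 0"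
  shows "\<bar>\<Sum>k=1..n. (2*pi*real k)^p * sin (2*pi*real k*x)\<bar> \<le> 2 * (2*pi*real n)^p * (1 / \<bar>sin (pi*x)\<bar>)"
proof -
  have e: "(2*pi*x)/2 = pi*x" by simp
  have "\<bar>\<Sum>k=1..n. (2*pi*real k)^p * sin (real k * (2*pi*x))\<bar> \<le> 2 * (2*pi*real n)^p * (1 / \<bar>sin (pi*x)\<bar>)"
    by (rule abel) (use sin_psum_bound[of "2*pi*x"] assms e in \<open>auto intro!: power_mono\<close>)
  then show ?thesis by (simp add: mult_ac)
qed

lemma R0_abel:
  assumes "sin (pi * x) \<noteq> 0" "n \<ge> 1"
  shows "\<bar>R0 n x\<bar> \<le> 3 / (real n * \<bar>sin (pi*x)\<bar>)"
proof -
  let ?s = "\<bar>sin (pi*x)\<bar>"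
  have s: "?s > 0" "?s \<le> 1" using assms by auto
  have h: "\<bar>\<Sum>k=1..n. cos (2*pi*real k*x)\<bar> \<le> 2 / ?s"
    using abel_cos[OF assms(1), where n=n and p=0] by simp
  have "\<bar>1 + 2 * (\<Sum>k=1..n. cos (2*pi*real k*x))\<bar> \<le> \<bar>1\<bar> + \<bar>2 * (\<Sum>k=1..n. cos (2*pi*real k*x))\<bar>"
    by (rule abs_triangle_ineq)
  also have "\<dots> \<le> 1 + 2 * (2 / ?s)" using h by (simp add: abs_mult)
  also have "\<dots> \<le> 5 / ?s"
  proof -
    have "1 \<le> 1 / ?s" using s by simp
    moreover have "5 / ?s = 1 / ?s + 4 / ?s" by (simp add: add_divide_distrib[symmetric])
    ultimately show ?thesis by simp
  qed
  finally have h2: "\<bar>1 + 2 * (\<Sum>k=1..n. cos (2*pi*real k*x))\<bar> \<le> 5 / ?s" .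
  have "\<bar>R0 n x\<bar> = \<bar>1 + 2 * (\<Sum>k=1..n. cos (2*pi*real k*x))\<bar> / real (2*n+1)"
    unfolding R0_def by simp
  also have "\<dots> \<le> (5 / ?s) / real (2*n+1)"
    using h2 by (intro divide_right_mono) auto
  also have "\<dots> = (5 / real (2*n+1)) * (1 / ?s)" by simp
  also have "\<dots> \<le> (3 / real n) * (1 / ?s)"
    using s assms(2) by (intro mult_right_mono) (auto simp: field_simps)
  also have "\<dots> = 3 / (real n * ?s)" by simp
  finally show ?thesis .
qed

lemma R1_abel:
  assumes "sin (pi * x) \<noteq> 0"
  shows "\<bar>R1 n x\<bar> \<le> 4 * pi / \<bar>sin (pi*x)\<bar>"
proof -
  let ?s = "\<bar>sin (pi*x)\<bar>"
  have s: "?s > 0" using assms by auto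
  have h: "\<bar>\<Sum>k=1..n. (2*pi*real k) * sin (2*pi*real k*x)\<bar> \<le> 2 * (2*pi*real n) * (1 / ?s)"
    using abel_sin[OF assms(1), where n=n and p=1] by simp
  have "\<bar>R1 n x\<bar> = 2 * \<bar>\<Sum>k=1..n. (2*pi*real k) * sin (2*pi*real k*x)\<bar> / real (2*n+1)"
    unfolding R1_def by (simp add: abs_mult)
  also have "\<dots> \<le> 2 * (2 * (2*pi*real n) * (1 / ?s)) / real (2*n+1)"
    using h by (intro divide_right_mono) auto
  also have "\<dots> = 4 * pi * (2 * real n / real (2*n+1)) / ?s" by (simp add: field_simps)
  also have "\<dots> \<le> 4 * pi * 1 / ?s"
    using s pi_gt_zero by (intro divide_right_mono mult_left_mono) auto
  finally show ?thesis by simp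
qed

lemma R2_abel:
  assumes "sin (pi * x) \<noteq> 0"
  shows "\<bar>R2 n x\<bar> \<le> 8 * pi^2 * real n / \<bar>sin (pi*x)\<bar>"
proof -
  let ?s = "\<bar>sin (pi*x)\<bar>"
  have s: "?s > 0" using assms by auto
  have h: "\<bar>\<Sum>k=1..n. (2*pi*real k)^2 * cos (2*pi*real k*x)\<bar> \<le> 2 * (2*pi*real n)^2 * (1 / ?s)"
    using abel_cos[OF assms(1), where n=n and p=2] by simp
  have "\<bar>R2 n x\<bar> = 2 * \<bar>\<Sum>k=1..n. (2*pi*real k)^2 * cos (2*pi*real k*x)\<bar> / real (2*n+1)"
    unfolding R2_def by (simp add: abs_mult)
  also have "\<dots> \<le> 2 * (2 * (2*pi*real n)^2 * (1 / ?s)) / real (2*n+1)"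
    using h by (intro divide_right_mono) auto
  also have "\<dots> = 16 * pi^2 * real n * (real n / real (2*n+1)) / ?s"
    by (simp add: power2_eq_square field_simps)
  also have "\<dots> \<le> 16 * pi^2 * real n * (1/2) / ?s"
    using s by (intro divide_right_mono mult_left_mono) (auto simp: field_simps)
  also have "\<dots> = 8 * pi^2 * real n / ?s" by simp
  finally show ?thesis .
qed

lemma R3_abel:
  assumes "sin (pi * x) \<noteq> 0"
  shows "\<bar>R3 n x\<bar> \<le> 16 * pi^3 * (real n)^2 / \<bar>sin (pi*x)\<bar>"
proof -
  let ?s = "\<bar>sin (pi*x)\<bar>"
  have s: "?s > 0" using assms by auto
  have h: "\<bar>\<Sum>k=1..n. (2*pi*real k)^3 * sin (2*pi*real k*x)\<bar> \<le> 2 * (2*pi*real n)^3 * (1 / ?s)"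
    using abel_sin[OF assms(1), where n=n and p=3] by simp
  have "\<bar>R3 n x\<bar> = 2 * \<bar>\<Sum>k=1..n. (2*pi*real k)^3 * sin (2*pi*real k*x)\<bar> / real (2*n+1)"
    unfolding R3_def by (simp add: abs_mult)
  also have "\<dots> \<le> 2 * (2 * (2*pi*real n)^3 * (1 / ?s)) / real (2*n+1)"
    using h by (intro divide_right_mono) auto
  also have "\<dots> = 32 * pi^3 * (real n)^2 * (real n / real (2*n+1)) / ?s"
    by (simp add: power3_eq_cube power2_eq_square field_simps)
  also have "\<dots> \<le> 32 * pi^3 * (real n)^2 * (1/2) / ?s"
    using s by (intro divide_right_mono mult_left_mono) (auto simp: field_simps)
  finally show ?thesis by simp
qed



lemma am_eq: "abs_mod1 x = \<bar>x - of_int (round x)\<bar>"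
  unfolding abs_mod1_def
  by (rule cInf_eq_minimum) (auto intro: round_diff_minimal)

lemma am_le: "abs_mod1 x \<le> \<bar>x - of_int m\<bar>"
  unfolding am_eq by (rule round_diff_minimal)

lemma am_nonneg: "abs_mod1 x \<ge> 0" unfolding am_eq by simp

lemma am_half: "abs_mod1 x \<le> 1/2"
  unfolding am_eq using of_int_round_abs_le[of x] by (simp add: abs_minus_commute)

lemma am_neg: "abs_mod1 (-x) = abs_mod1 x"
proof -
  have "abs_mod1 (-x) \<le> abs_mod1 x"
    using am_le[of "-x" "- round x"] unfolding am_eq by simp
  moreover have "abs_mod1 x \<le> abs_mod1 (-x)"
    using am_le[of "x" "- round (-x)"] unfolding am_eq[of "-x"] by simp
  ultimately show ?thesis by simp
qed

lemma am_triangle: "abs_mod1 (x + y) \<le> abs_mod1 x + abs_mod1 y"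
proof -
  have "abs_mod1 (x + y) \<le> \<bar>(x + y) - of_int (round x + round y)\<bar>" by (rule am_le)
  also have "\<dots> \<le> \<bar>x - of_int (round x)\<bar> + \<bar>y - of_int (round y)\<bar>" by simp
  finally show ?thesis unfolding am_eq[of x] am_eq[of y] .
qed

lemma am_tri3: "abs_mod1 (a - c) \<le> abs_mod1 (a - b) + abs_mod1 (b - c)"
  using am_triangle[of "a - b" "b - c"] by simp

lemma am_shift: "abs_mod1 (x + of_int j) = abs_mod1 x"
proof -
  have "abs_mod1 (x + of_int j) \<le> abs_mod1 x"
    using am_le[of "x + of_int j" "round x + j"] unfolding am_eq[of x] by simp
  moreover have "abs_mod1 x \<le> abs_mod1 (x + of_int j)"
    using am_le[of "x" "round (x + of_int j) - j"] unfolding am_eq[of "x + of_int j"] by (simp add: algebra_simps)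
  ultimately show ?thesis by simp
qed

lemma am_sym: "abs_mod1 (a - b) = abs_mod1 (b - a)"
  using am_neg[of "a - b"] by simp

lemma sc_vals: "sin_coeff 0 = 0" "sin_coeff (Suc 0) = 1" "sin_coeff (Suc (Suc 0)) = 0"
   "sin_coeff (Suc (Suc (Suc 0))) = -1/6" "sin_coeff (Suc (Suc (Suc (Suc 0)))) = 0"
  by (simp_all add: sin_coeff_def)

lemma fact35: "fact 3 = (6::real)" "fact 5 = (120::real)"
  by (simp_all add: eval_nat_numeral)

lemma sin_lower: "(y::real) \<ge> 0 \<Longrightarrow> sin y \<ge> y - y^3/6"
proof -
  assume y: "y \<ge> 0"
  have "\<bar>sin y - (\<Sum>m<3. sin_coeff m * y ^ m)\<bar> \<le> inverse (fact 3) * \<bar>y\<bar> ^ 3"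
    by (rule Maclaurin_sin_bound)
  moreover have "(\<Sum>m<3. sin_coeff m * y ^ m) = y"
    by (simp add: eval_nat_numeral sc_vals)
  moreover have "inverse (fact 3) * \<bar>y\<bar> ^ 3 = y^3/6" using y by (simp add: fact35 field_simps)
  ultimately have "\<bar>sin y - y\<bar> \<le> y^3 / 6" by simp
  then show ?thesis by linarith
qed

lemma sin_upper: "(y::real) \<ge> 0 \<Longrightarrow> sin y \<le> y - y^3/6 + y^5/120"
proof -
  assume y: "y \<ge> 0"
  have "\<bar>sin y - (\<Sum>m<5. sin_coeff m * y ^ m)\<bar> \<le> inverse (fact 5) * \<bar>y\<bar> ^ 5"
    by (rule Maclaurin_sin_bound)
  moreover have "(\<Sum>m<5. sin_coeff m * y ^ m) = y - y^3/6"
    by (simp add: eval_nat_numeral sc_vals)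
  moreover have "inverse (fact 5) * \<bar>y\<bar> ^ 5 = y^5/120" using y by (simp add: fact35 field_simps)
  ultimately have "\<bar>sin y - (y - y^3/6)\<bar> \<le> y^5 / 120" by simp
  then show ?thesis by linarith
qed


lemma sin_pi_shift: "\<bar>sin (pi * (s + of_int r))\<bar> = \<bar>sin (pi * s)\<bar>"
proof -
  have s0: "sin (of_int r * pi) = 0" using sin_times_pi_eq_0[of "of_int r"] by simp
  have c1: "\<bar>cos (of_int r * pi)\<bar> = 1"
  proof -
    have "(cos (of_int r * pi))^2 = 1" using sin_cos_squared_add[of "of_int r * pi"] s0 by simp
    then have "cos (of_int r * pi) = 1 \<or> cos (of_int r * pi) = -1" by (simp add: power2_eq_1_iff)
    then show ?thesis by auto
  qed
  have "sin (pi * (s + of_int r)) = sin (pi * s) * cos (of_int r * pi)"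
    using s0 by (simp add: distrib_left sin_add mult.commute)
  then show ?thesis using c1 by (simp add: abs_mult)
qed

lemma sin_pi_d: assumes "0 \<le> d" "d \<le> 1/2" shows "sin (pi * d) \<ge> 1.8 * d"
proof -
  let ?y = "pi * d"
  have y0: "?y \<ge> 0" using assms by simp
  have "?y^2 \<le> (pi * (1/2))^2" using assms by (intro power_mono mult_left_mono) auto
  also have "\<dots> = pi * pi / 4" by (simp add: power2_eq_square)
  also have "\<dots> \<le> 3.1416 * 3.1416 / 4" using pi_approx by (intro divide_right_mono mult_mono) auto
  finally have y2: "?y^2 \<le> 2.4675" by simp
  have "?y^3/6 = ?y * ?y^2 / 6" by (simp add: power3_eq_cube power2_eq_square)
  also have "\<dots> \<le> ?y * 2.4675 / 6" using y2 y0 by (intro divide_right_mono mult_left_mono) auto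
  finally have "sin ?y \<ge> ?y - ?y * 2.4675 / 6" using sin_lower[OF y0] by linarith
  moreover have "?y - ?y * 2.4675 / 6 \<ge> 1.8 * d"
  proof -
    have "?y - ?y * 2.4675 / 6 = 0.58875 * (pi * d)" by simp
    also have "\<dots> \<ge> 0.58875 * (3.1415 * d)" using pi_approx assms by (intro mult_left_mono mult_right_mono) auto
    finally have h1: "?y - ?y * 2.4675 / 6 \<ge> 0.58875 * (3.1415 * d)" .
    have h2: "0.58875 * (3.1415 * d) \<ge> 1.8 * d" using assms by simp
    show ?thesis using h2 h1 by (rule order_trans)
  qed
  ultimately show ?thesis by linarith
qed

lemma sin_am: "\<bar>sin (pi * x)\<bar> \<ge> 1.8 * abs_mod1 x"
proof -
  define s where "s = x - of_int (round x)"
  have x: "x = s + of_int (round x)" unfolding s_def by simp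
  have d: "abs_mod1 x = \<bar>s\<bar>" unfolding am_eq s_def ..
  have "\<bar>sin (pi * x)\<bar> = \<bar>sin (pi * s)\<bar>" by (subst x, rule sin_pi_shift)
  also have "\<dots> = \<bar>sin (pi * \<bar>s\<bar>)\<bar>" by (cases "s \<ge> 0") auto
  also have "\<dots> \<ge> sin (pi * \<bar>s\<bar>)" by simp
  finally have "\<bar>sin (pi * x)\<bar> \<ge> sin (pi * \<bar>s\<bar>)" .
  moreover have "sin (pi * \<bar>s\<bar>) \<ge> 1.8 * \<bar>s\<bar>"
    using am_half[of x] unfolding d by (intro sin_pi_d) auto
  ultimately show ?thesis unfolding d by linarith
qed

lemma cos_shift_int: "cos (2*pi*real k*(x + of_int j)) = cos (2*pi*real k*x)"
proof -
  have "2*pi*real k*(x + of_int j) = 2*pi*real k*x + (2*pi) * of_int (int k * j)"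
    by (simp add: algebra_simps)
  then show ?thesis by (simp only: cos_add cos_int_2pin sin_int_2pin)
qed

lemma sin_shift_int: "sin (2*pi*real k*(x + of_int j)) = sin (2*pi*real k*x)"
proof -
  have "2*pi*real k*(x + of_int j) = 2*pi*real k*x + (2*pi) * of_int (int k * j)"
    by (simp add: algebra_simps)
  then show ?thesis by (simp only: sin_add cos_int_2pin sin_int_2pin)
qed

lemma R0_periodic: "R0 n (x + of_int j) = R0 n x"
  unfolding R0_def cos_shift_int ..
lemma R1_periodic: "R1 n (x + of_int j) = R1 n x"
  unfolding R1_def sin_shift_int ..
lemma R0_even: "R0 n (-x) = R0 n x"
  unfolding R0_def by simp

lemma R0_closed: "R0 n d * (real (2*n+1) * sin (pi * d)) = sin (real (2*n+1) * pi * d)"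
proof -
  have "2 * sin ((2*pi*d)/2) * (\<Sum>k=1..n. cos (real k * (2*pi*d))) = sin ((real n + 1/2) * (2*pi*d)) - sin ((2*pi*d)/2)"
    by (rule dir_cos_sum)
  moreover have "(\<Sum>k=1..n. cos (real k * (2*pi*d))) = (\<Sum>k=1..n. cos (2*pi*real k*d))"
    by (simp add: mult_ac)
  moreover have "(real n + 1/2) * (2*pi*d) = real (2*n+1) * pi * d" by (simp add: algebra_simps)
  ultimately have e: "sin (pi*d) * (1 + 2 * (\<Sum>k=1..n. cos (2*pi*real k*d))) = sin (real (2*n+1) * pi * d)"
    by (simp add: algebra_simps)
  have r: "R0 n d * real (2*n+1) = 1 + 2 * (\<Sum>k=1..n. cos (2*pi*real k*d))"
    unfolding R0_def by simp
  have "R0 n d * (real (2*n+1) * sin (pi * d)) = (R0 n d * real (2*n+1)) * sin (pi * d)"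
    by (simp only: mult.assoc)
  also have "\<dots> = sin (pi*d) * (1 + 2 * (\<Sum>k=1..n. cos (2*pi*real k*d)))"
    unfolding r by (simp only: mult.commute)
  also have "\<dots> = sin (real (2*n+1) * pi * d)" by (rule e)
  finally show ?thesis .
qed


lemma poly_bound:
  fixes u :: real
  assumes "u \<ge> pi/4" "u \<le> pi"
  shows "u - u^3/6 + u^5/120 \<le> 0.91 * u"
proof -
  define q where "q = u^2"
  have u0: "u > 0" using assms pi_gt_zero by linarith
  have "q \<ge> (pi/4)^2" unfolding q_def using assms pi_gt_zero by (intro power_mono) auto
  moreover have "(pi/4)^2 \<ge> (3.14/4)^2" using pi_approx by (intro power_mono) auto
  ultimately have q1: "q \<ge> 0.6" by (simp add: power2_eq_square)
  have "q \<le> pi^2" unfolding q_def using assms u0 by (intro power_mono) auto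
  moreover have "pi^2 \<le> 3.15^2" using pi_approx by (intro power_mono) auto
  ultimately have q2: "q \<le> 9.93" by (simp add: power2_eq_square)
  have "(q - 0.56) * (q - 19.4) \<le> 0" using q1 q2 by (intro mult_nonneg_nonpos) auto
  then have h: "q*q - 19.96*q + 10.864 \<le> 0" by (simp add: algebra_simps)
  have p: "1 - q/6 + q*q/120 \<le> 0.91" using h q1 by simp
  have "u - u^3/6 + u^5/120 = u * (1 - q/6 + q*q/120)"
    unfolding q_def by (simp add: algebra_simps power2_eq_square power3_eq_cube eval_nat_numeral)
  also have "\<dots> \<le> u * 0.91" using p u0 by (intro mult_left_mono) auto
  finally show ?thesis by simp
qed

lemma R0_far:
  assumes n5: "n \<ge> 5" and far: "abs_mod1 x \<ge> 1 / (4 * real (2*n+1))"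
  shows "\<bar>R0 n x\<bar> \<le> 0.98"
proof -
  define s where "s = x - of_int (round x)"
  define d where "d = abs_mod1 x"
  define N where "N = real (2*n+1)"
  have dS: "d = \<bar>s\<bar>" unfolding d_def am_eq s_def ..
  have "R0 n x = R0 n (s + of_int (round x))" unfolding s_def by simp
  also have "\<dots> = R0 n s" by (rule R0_periodic)
  also have "\<dots> = R0 n d" unfolding dS by (cases "s \<ge> 0") (auto simp: R0_even)
  finally have Rx: "R0 n x = R0 n d" .
  have N11: "N \<ge> 11" unfolding N_def using n5 by simp
  have "1 / (4 * real (2*n+1)) > 0" by simp
  then have d0: "d > 0" using far unfolding d_def by linarith
  have dh: "d \<le> 1/2" unfolding d_def by (rule am_half)
  have sd: "sin (pi * d) \<ge> 1.8 * d" using d0 dh by (intro sin_pi_d) auto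
  have cl: "R0 n d * (N * sin (pi * d)) = sin (N * pi * d)" unfolding N_def by (rule R0_closed)
  have sp: "sin (pi * d) > 0" using sd d0 by linarith
  have pos: "N * sin (pi * d) > 0" using sp N11 by simp
  have cla: "\<bar>R0 n d\<bar> * (N * sin (pi * d)) = \<bar>sin (N * pi * d)\<bar>"
  proof -
    have "\<bar>sin (N * pi * d)\<bar> = \<bar>R0 n d * (N * sin (pi * d))\<bar>" using cl by simp
    also have "\<dots> = \<bar>R0 n d\<bar> * \<bar>N * sin (pi * d)\<bar>" by (rule abs_mult)
    also have "\<bar>N * sin (pi * d)\<bar> = N * sin (pi * d)" using pos by simp
    finally show ?thesis by simp
  qed
  show ?thesis
  proof (cases "d \<ge> 1 / N")
    case True
    have "N * sin (pi * d) \<ge> N * (1.8 * d)" using sd N11 by (intro mult_left_mono) auto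
    moreover have "N * (1.8 * d) \<ge> 1.8" using True N11 by (simp add: field_simps)
    ultimately have P: "N * sin (pi * d) \<ge> 1.8" by linarith
    have "\<bar>R0 n d\<bar> * 1.8 \<le> \<bar>R0 n d\<bar> * (N * sin (pi * d))" using P by (intro mult_left_mono) auto
    also have "\<dots> \<le> 1" unfolding cla by simp
    finally show ?thesis unfolding Rx by simp
  next
    case False
    define u where "u = N * pi * d"
    have u1: "u \<ge> pi / 4"
    proof -
      have "N * d \<ge> 1/4" using far N11 unfolding d_def N_def by (simp add: field_simps)
      then have "pi * (N * d) \<ge> pi * (1/4)" using pi_gt_zero by (intro mult_left_mono) auto
      then show ?thesis unfolding u_def by (simp add: mult_ac)
    qed
    have u2: "u \<le> pi"
    proof -
      have "N * d \<le> 1" using False N11 by (simp add: field_simps)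
      then have "pi * (N * d) \<le> pi * 1" using pi_gt_zero by (intro mult_left_mono) auto
      then show ?thesis unfolding u_def by (simp add: mult_ac)
    qed
    have u0: "u > 0" using u1 pi_gt_zero by linarith
    have su0: "sin u \<ge> 0" using u0 u2 by (intro sin_ge_zero) auto
    have su: "sin u \<le> 0.91 * u" using sin_upper[of u] u0 poly_bound[OF u1 u2] by linarith
    have y0: "pi * d \<ge> 0" using d0 by simp
    have "N * sin (pi * d) \<ge> N * (pi * d - (pi * d)^3 / 6)"
      using sin_lower[OF y0] N11 by (intro mult_left_mono) auto
    also have "N * (pi * d - (pi * d)^3 / 6) = u - u * (u^2 / (6 * N^2))"
      unfolding u_def using N11 by (simp add: field_simps power2_eq_square power3_eq_cube)
    finally have P1: "N * sin (pi * d) \<ge> u - u * (u^2 / (6 * N^2))" .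
    have "u^2 / (6 * N^2) \<le> pi^2 / (6 * 11^2)"
    proof (intro frac_le)
      show "u^2 \<le> pi^2" using u0 u2 by (intro power_mono) auto
      show "6 * 11^2 \<le> 6 * N^2" using power_mono[of 11 N 2] N11 by simp
    qed auto
    also have "\<dots> \<le> 3.15^2 / (6 * 11^2)" using pi_approx by (intro divide_right_mono power_mono) auto
    also have "\<dots> \<le> 7/500" by (simp add: power2_eq_square)
    finally have "u * (u^2 / (6 * N^2)) \<le> u * (7/500)" using u0 by (intro mult_left_mono) auto
    with P1 have P: "N * sin (pi * d) \<ge> (493/500) * u" by linarith
    have "\<bar>R0 n d\<bar> * ((493/500) * u) \<le> \<bar>R0 n d\<bar> * (N * sin (pi * d))" using P by (intro mult_left_mono) auto
    also have "\<dots> = sin u" unfolding cla u_def using su0 u_def by simp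
    also have "\<dots> \<le> 0.91 * u" by (rule su)
    finally have "(\<bar>R0 n d\<bar> * (493/500)) * u \<le> 0.91 * u" by (simp add: mult_ac)
    then have "\<bar>R0 n d\<bar> * (493/500) \<le> 0.91" using u0 by simp
    then show ?thesis unfolding Rx by simp
  qed
qed



lemma harm_le_ln: "m \<ge> 1 \<Longrightarrow> harm m \<le> 1 + ln (real m)"
  using euler_mascheroni_sequence_decreasing[of 1 m] by (simp add: harm_def)

lemma nat_floor_props:
  assumes "(x::real) \<ge> 0"
  shows "real (nat \<lfloor>x\<rfloor>) \<le> x" "x < real (nat \<lfloor>x\<rfloor>) + 1"
proof -
  have f: "0 \<le> \<lfloor>x\<rfloor>" using assms by simp
  have e: "real (nat \<lfloor>x\<rfloor>) = of_int \<lfloor>x\<rfloor>" using f by simp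
  show "real (nat \<lfloor>x\<rfloor>) \<le> x" unfolding e by simp
  show "x < real (nat \<lfloor>x\<rfloor>) + 1" unfolding e by linarith
qed

lemma sep_sum:
  fixes \<tau> :: "nat \<Rightarrow> real" and \<theta> \<Delta> :: real
  assumes D0: "\<Delta> > 0" and m1: "m \<ge> 1"
    and sep: "\<And>j k. j < m \<Longrightarrow> k < m \<Longrightarrow> j \<noteq> k \<Longrightarrow> abs_mod1 (\<tau> j - \<tau> k) \<ge> \<Delta>"
    and K: "K \<subseteq> {..<m}"
    and far: "\<And>k. k \<in> K \<Longrightarrow> abs_mod1 (\<theta> - \<tau> k) \<ge> \<Delta> / 2"
  shows "(\<Sum>k\<in>K. 1 / abs_mod1 (\<theta> - \<tau> k)) \<le> 6 / \<Delta> * (1 + ln (real m))"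
proof -
  define d where "d k = abs_mod1 (\<theta> - \<tau> k)" for k
  define r where "r k = round (\<theta> - \<tau> k)" for k
  define s where "s k = (\<theta> - \<tau> k) - of_int (r k)" for k
  define i where "i k = nat \<lfloor>2 * d k / \<Delta>\<rfloor>" for k
  have ds: "d k = \<bar>s k\<bar>" for k unfolding d_def s_def r_def am_eq ..
  have dpos: "d k > 0" if "k \<in> K" for k using far[OF that] D0 unfolding d_def by (smt (verit) half_gt_zero)
  have iprops: "real (i k) \<le> 2 * d k / \<Delta>" "2 * d k / \<Delta> < real (i k) + 1" if "k \<in> K" for k
    using nat_floor_props[of "2 * d k / \<Delta>"] dpos[OF that] D0 unfolding i_def by auto
  have i1: "i k \<ge> 1" if "k \<in> K" for k
  proof -
    have "2 * d k / \<Delta> \<ge> 1" using far[OF that] D0 unfolding d_def by (simp add: field_simps)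
    then show ?thesis using iprops(2)[OF that] by linarith
  qed
  have dlow: "d k \<ge> real (i k) * \<Delta> / 2" if "k \<in> K" for k
    using iprops(1)[OF that] D0 by (simp add: field_simps)
  have dup: "d k < (real (i k) + 1) * \<Delta> / 2" if "k \<in> K" for k
    using iprops(2)[OF that] D0 by (simp add: field_simps)
  define K1 where "K1 = {k\<in>K. i k \<le> m}"
  define K2 where "K2 = {k\<in>K. \<not> i k \<le> m}"
  have finK: "finite K" using K finite_subset by blast
  have split: "(\<Sum>k\<in>K. 1 / d k) = (\<Sum>k\<in>K1. 1 / d k) + (\<Sum>k\<in>K2. 1 / d k)"
  proof -
    have "K = K1 \<union> K2" unfolding K1_def K2_def by auto
    moreover have "finite K1" "finite K2" "K1 \<inter> K2 = {}" using finK unfolding K1_def K2_def by auto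
    ultimately show ?thesis using sum.union_disjoint[of K1 K2 "\<lambda>k. 1 / d k"] by simp
  qed
  have S2: "(\<Sum>k\<in>K2. 1 / d k) \<le> 2 / \<Delta>"
  proof -
    have "(\<Sum>k\<in>K2. 1 / d k) \<le> (\<Sum>k\<in>K2. 2 / (real m * \<Delta>))"
    proof (intro sum_mono)
      fix k assume k: "k \<in> K2"
      then have kK: "k \<in> K" and im: "i k \<ge> m + 1" unfolding K2_def by auto
      have "d k \<ge> real (i k) * \<Delta> / 2" by (rule dlow[OF kK])
      moreover have "real (i k) * \<Delta> / 2 \<ge> real m * \<Delta> / 2" using im D0 by (simp add: field_simps)
      ultimately have "d k \<ge> real m * \<Delta> / 2" by linarith
      then show "1 / d k \<le> 2 / (real m * \<Delta>)" using m1 D0 dpos[OF kK]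
        by (simp add: field_simps)
    qed
    also have "\<dots> = real (card K2) * (2 / (real m * \<Delta>))" by simp
    also have "\<dots> \<le> real m * (2 / (real m * \<Delta>))"
    proof -
      have "card K2 \<le> card {..<m}" using K unfolding K2_def by (intro card_mono) auto
      then show ?thesis using D0 m1 by (intro mult_right_mono) auto
    qed
    also have "\<dots> = 2 / \<Delta>" using m1 by simp
    finally show ?thesis .
  qed
  define \<phi> where "\<phi> k = (i k, s k \<ge> 0)" for k
  have inj: "inj_on \<phi> K1"
  proof (rule inj_onI, rule ccontr)
    fix k l assume k: "k \<in> K1" and l: "l \<in> K1" and eq: "\<phi> k = \<phi> l" and ne: "k \<noteq> l"
    have kK: "k \<in> K" and lK: "l \<in> K" using k l unfolding K1_def by auto
    have ii: "i k = i l" and sg: "(s k \<ge> 0) = (s l \<ge> 0)" using eq unfolding \<phi>_def by auto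
    have dd: "\<bar>d k - d l\<bar> < \<Delta> / 2"
      using dlow[OF kK] dup[OF kK] dlow[OF lK] dup[OF lK] ii by (simp add: field_simps) (smt (verit))
    have ss: "\<bar>s k - s l\<bar> < \<Delta> / 2"
    proof (cases "s k \<ge> 0")
      case True
      then have "s l \<ge> 0" using sg by simp
      then show ?thesis using True dd unfolding ds by simp
    next
      case False
      then have "s l < 0" using sg by simp
      then show ?thesis using False dd unfolding ds by (simp add: abs_minus_commute)
    qed
    have "abs_mod1 (\<tau> l - \<tau> k) \<le> \<bar>(\<tau> l - \<tau> k) - of_int (r k - r l)\<bar>" by (rule am_le)
    also have "(\<tau> l - \<tau> k) - of_int (r k - r l) = s k - s l" unfolding s_def by simp
    finally have "abs_mod1 (\<tau> l - \<tau> k) < \<Delta> / 2" using ss by linarith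
    moreover have "abs_mod1 (\<tau> l - \<tau> k) \<ge> \<Delta>" using sep[of l k] K kK lK ne by auto
    ultimately show False using D0 by linarith
  qed
  have S1: "(\<Sum>k\<in>K1. 1 / d k) \<le> 4 / \<Delta> * (1 + ln (real m))"
  proof -
    have "(\<Sum>k\<in>K1. 1 / d k) \<le> (\<Sum>k\<in>K1. 2 / \<Delta> * (1 / real (i k)))"
    proof (intro sum_mono)
      fix k assume k: "k \<in> K1"
      then have kK: "k \<in> K" unfolding K1_def by auto
      have "d k \<ge> real (i k) * \<Delta> / 2" by (rule dlow[OF kK])
      moreover have "real (i k) > 0" using i1[OF kK] by simp
      ultimately show "1 / d k \<le> 2 / \<Delta> * (1 / real (i k))" using D0 dpos[OF kK]
        by (simp add: field_simps)
    qed
    also have "\<dots> = (\<Sum>p\<in>\<phi> ` K1. 2 / \<Delta> * (1 / real (fst p)))"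
      by (subst sum.reindex[OF inj]) (simp add: \<phi>_def)
    also have "\<dots> \<le> (\<Sum>p\<in>{1..m} \<times> (UNIV::bool set). 2 / \<Delta> * (1 / real (fst p)))"
    proof (rule sum_mono2)
      show "\<phi> ` K1 \<subseteq> {1..m} \<times> UNIV" unfolding \<phi>_def K1_def using i1 by auto
    qed (use D0 in auto)
    also have "\<dots> = (\<Sum>a\<in>{1..m}. \<Sum>b\<in>(UNIV::bool set). 2 / \<Delta> * (1 / real a))"
      by (subst sum.cartesian_product) (simp add: split_def)
    also have "\<dots> = 2 * (2 / \<Delta>) * (\<Sum>a\<in>{1..m}. 1 / real a)"
      by (simp add: UNIV_bool sum_distrib_left)
    also have "(\<Sum>a\<in>{1..m}. 1 / real a) = harm m" unfolding harm_def by (simp add: inverse_eq_divide)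
    also have "2 * (2 / \<Delta>) * harm m \<le> 2 * (2 / \<Delta>) * (1 + ln (real m))"
      using harm_le_ln[OF m1] D0 by (intro mult_left_mono) auto
    finally show ?thesis by simp
  qed
  have "(\<Sum>k\<in>K. 1 / abs_mod1 (\<theta> - \<tau> k)) = (\<Sum>k\<in>K. 1 / d k)" unfolding d_def ..
  also have "\<dots> \<le> 4 / \<Delta> * (1 + ln (real m)) + 2 / \<Delta>" using split S1 S2 by linarith
  also have "\<dots> \<le> 6 / \<Delta> * (1 + ln (real m))"
  proof -
    have "ln (real m) \<ge> 0" using m1 by simp
    then have a: "2 / \<Delta> * 1 \<le> 2 / \<Delta> * (1 + ln (real m))" using D0 by (intro mult_left_mono) auto
    have b: "4 / \<Delta> * (1 + ln (real m)) + 2 / \<Delta> * (1 + ln (real m)) = (4 / \<Delta> + 2 / \<Delta>) * (1 + ln (real m))"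
      by (rule distrib_right[symmetric])
    have c: "4 / \<Delta> + 2 / \<Delta> = 6 / \<Delta>" by (simp add: add_divide_distrib[symmetric])
    show ?thesis using a b c by simp
  qed
  finally show ?thesis .
qed



lemma row_iso:
  fixes x y :: "nat \<Rightarrow> complex" and p q :: "nat \<Rightarrow> real"
  assumes j: "j < m" and pj: "p j = 1" and qj: "q j = 0"
    and eq: "(\<Sum>k<m. of_real (p k) * x k) + (\<Sum>k<m. of_real (q k) * y k) = r"
    and X: "\<And>k. k < m \<Longrightarrow> cmod (x k) \<le> X" and Y: "\<And>k. k < m \<Longrightarrow> cmod (y k) \<le> Y"
  shows "cmod (x j - r) \<le> (\<Sum>k\<in>{..<m}-{j}. \<bar>p k\<bar>) * X + (\<Sum>k\<in>{..<m}-{j}. \<bar>q k\<bar>) * Y"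
proof -
  let ?R = "{..<m}-{j}"
  have jm: "j \<in> {..<m}" using j by simp
  have s1: "(\<Sum>k<m. of_real (p k) * x k) = x j + (\<Sum>k\<in>?R. of_real (p k) * x k)"
    using sum.remove[OF _ jm, of "\<lambda>k. of_real (p k) * x k"] pj by simp
  have s2: "(\<Sum>k<m. of_real (q k) * y k) = (\<Sum>k\<in>?R. of_real (q k) * y k)"
    using sum.remove[OF _ jm, of "\<lambda>k. of_real (q k) * y k"] qj by simp
  have "x j - r = - ((\<Sum>k\<in>?R. of_real (p k) * x k) + (\<Sum>k\<in>?R. of_real (q k) * y k))"
    using eq s1 s2 by (simp add: algebra_simps)
  then have "cmod (x j - r) = cmod ((\<Sum>k\<in>?R. of_real (p k) * x k) + (\<Sum>k\<in>?R. of_real (q k) * y k))"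
    by (simp only: norm_minus_cancel)
  then have "cmod (x j - r) \<le> cmod (\<Sum>k\<in>?R. of_real (p k) * x k) + cmod (\<Sum>k\<in>?R. of_real (q k) * y k)"
    using norm_triangle_ineq by simp
  also have "\<dots> \<le> (\<Sum>k\<in>?R. \<bar>p k\<bar> * X) + (\<Sum>k\<in>?R. \<bar>q k\<bar> * Y)"
  proof (intro add_mono order_trans[OF norm_sum] sum_mono)
    fix k assume "k \<in> ?R"
    then have k: "k < m" by auto
    show "cmod (of_real (p k) * x k) \<le> \<bar>p k\<bar> * X"
      using X[OF k] by (simp add: norm_mult mult_left_mono)
    show "cmod (of_real (q k) * y k) \<le> \<bar>q k\<bar> * Y"
      using Y[OF k] by (simp add: norm_mult mult_left_mono)
  qed
  also have "\<dots> = (\<Sum>k\<in>?R. \<bar>p k\<bar>) * X + (\<Sum>k\<in>?R. \<bar>q k\<bar>) * Y"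
    by (simp add: sum_distrib_right)
  finally show ?thesis .
qed

lemma dom:
  fixes u w :: "nat \<Rightarrow> real"
  assumes m: "m \<ge> 1" and s0: "\<sigma> \<ge> 0" and s1: "2 * \<sigma> < 1"
    and U: "\<And>j. j < m \<Longrightarrow> u j \<le> \<rho> + \<sigma> * (Max (u ` {..<m}) + Max (w ` {..<m}))"
    and W: "\<And>j. j < m \<Longrightarrow> w j \<le> \<rho> + \<sigma> * (Max (u ` {..<m}) + Max (w ` {..<m}))"
  shows "(1 - 2 * \<sigma>) * (Max (u ` {..<m}) + Max (w ` {..<m})) \<le> 2 * \<rho>"
proof -
  let ?U = "Max (u ` {..<m})" and ?W = "Max (w ` {..<m})"
  have "0 \<in> {..<m}" using m by simp
  then have ne: "u ` {..<m} \<noteq> {}" "w ` {..<m} \<noteq> {}" by blast+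
  have "?U \<in> u ` {..<m}" using ne by (intro Max_in) auto
  then obtain j where j: "j < m" "?U = u j" by auto
  have "?W \<in> w ` {..<m}" using ne by (intro Max_in) auto
  then obtain l where l: "l < m" "?W = w l" by auto
  have "?U + ?W \<le> 2 * \<rho> + 2 * \<sigma> * (?U + ?W)" using U[OF j(1)] W[OF l(1)] j l by linarith
  then show ?thesis by (simp add: algebra_simps)
qed

definition sysE where
  "sysE m p q p' q' x y r1 r2 \<longleftrightarrow> (\<forall>j<m.
     (\<Sum>k<m. of_real (p j k) * x k) + (\<Sum>k<m. of_real (q j k) * y k) = r1 j \<and>
     (\<Sum>k<m. of_real (p' j k) * x k) + (\<Sum>k<m. of_real (q' j k) * y k) = (r2 j :: complex))"

definition goodc where
  "goodc m p q p' q' \<sigma> \<longleftrightarrow> (\<forall>j<m. p j j = 1 \<and> q j j = 0 \<and> p' j j = 0 \<and> q' j j = 1 \<and>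
     (\<Sum>k\<in>{..<m}-{j}. \<bar>p j k\<bar>) + (\<Sum>k\<in>{..<m}-{j}. \<bar>q j k\<bar>) \<le> \<sigma> \<and>
     (\<Sum>k\<in>{..<m}-{j}. \<bar>p' j k\<bar>) + (\<Sum>k\<in>{..<m}-{j}. \<bar>q' j k\<bar>) \<le> \<sigma>)"

lemma row_both:
  fixes x y :: "nat \<Rightarrow> complex"
  assumes g: "goodc m p q p' q' \<sigma>" and S: "sysE m p q p' q' x y r1 r2" and j: "j < m"
    and X: "\<And>k. k < m \<Longrightarrow> cmod (x k) \<le> T" and Y: "\<And>k. k < m \<Longrightarrow> cmod (y k) \<le> T"
  shows "cmod (x j - r1 j) \<le> \<sigma> * T" "cmod (y j - r2 j) \<le> \<sigma> * T"
proof -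
  have T0: "T \<ge> 0" using X[OF j] norm_ge_zero[of "x j"] by linarith
  have gj: "p j j = 1" "q j j = 0" "p' j j = 0" "q' j j = 1"
    "(\<Sum>k\<in>{..<m}-{j}. \<bar>p j k\<bar>) + (\<Sum>k\<in>{..<m}-{j}. \<bar>q j k\<bar>) \<le> \<sigma>"
    "(\<Sum>k\<in>{..<m}-{j}. \<bar>p' j k\<bar>) + (\<Sum>k\<in>{..<m}-{j}. \<bar>q' j k\<bar>) \<le> \<sigma>"
    using g j unfolding goodc_def by auto
  have e1: "(\<Sum>k<m. of_real (p j k) * x k) + (\<Sum>k<m. of_real (q j k) * y k) = r1 j"
   and e2: "(\<Sum>k<m. of_real (q' j k) * y k) + (\<Sum>k<m. of_real (p' j k) * x k) = r2 j"
    using S j unfolding sysE_def by (auto simp: add.commute)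
  have "cmod (x j - r1 j) \<le> (\<Sum>k\<in>{..<m}-{j}. \<bar>p j k\<bar>) * T + (\<Sum>k\<in>{..<m}-{j}. \<bar>q j k\<bar>) * T"
    by (rule row_iso[OF j gj(1) gj(2) e1 X Y])
  also have "\<dots> \<le> \<sigma> * T" using gj(5) T0 by (simp add: distrib_right[symmetric] mult_right_mono)
  finally show "cmod (x j - r1 j) \<le> \<sigma> * T" .
  have "cmod (y j - r2 j) \<le> (\<Sum>k\<in>{..<m}-{j}. \<bar>q' j k\<bar>) * T + (\<Sum>k\<in>{..<m}-{j}. \<bar>p' j k\<bar>) * T"
    by (rule row_iso[OF j gj(4) gj(3) e2 Y X])
  also have "\<dots> \<le> \<sigma> * T" using gj(6) T0 by (simp add: distrib_right[symmetric] mult_right_mono)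
  finally show "cmod (y j - r2 j) \<le> \<sigma> * T" .
qed

lemma kernel_cx:
  fixes x y :: "nat \<Rightarrow> complex"
  assumes g: "goodc m p q p' q' \<sigma>" and s0: "\<sigma> \<ge> 0" and s1: "\<sigma> \<le> 1/4" and m: "m \<ge> 1"
    and S: "sysE m p q p' q' x y (\<lambda>_. 0) (\<lambda>_. 0)" and k: "k < m"
  shows "x k = 0 \<and> y k = 0"
proof -
  define u where "u j = cmod (x j)" for j
  define w where "w j = cmod (y j)" for j
  let ?U = "Max (u ` {..<m})" and ?W = "Max (w ` {..<m})"
  have uU: "u j \<le> ?U" if "j < m" for j using that by (intro Max_ge) auto
  have wW: "w j \<le> ?W" if "j < m" for j using that by (intro Max_ge) auto
  have u0: "u j \<ge> 0" "w j \<ge> 0" for j unfolding u_def w_def by auto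
  have X: "cmod (x j) \<le> ?U + ?W" if "j < m" for j using uU[OF that] wW[OF that] u0[of j] unfolding u_def w_def by linarith
  have Y: "cmod (y j) \<le> ?U + ?W" if "j < m" for j using uU[OF that] wW[OF that] u0[of j] unfolding u_def w_def by linarith
  have "(1 - 2 * \<sigma>) * (?U + ?W) \<le> 2 * 0"
  proof (rule dom[OF m s0])
    show "2 * \<sigma> < 1" using s1 by simp
    fix j assume j: "j < m"
    show "u j \<le> 0 + \<sigma> * (?U + ?W)" using row_both(1)[OF g S j X Y] unfolding u_def by simp
    show "w j \<le> 0 + \<sigma> * (?U + ?W)" using row_both(2)[OF g S j X Y] unfolding w_def by simp
  qed
  moreover have "1 - 2 * \<sigma> > 0" using s1 by simp
  ultimately have "?U + ?W \<le> 0" by (simp add: mult_le_0_iff)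
  moreover have m0: "0 < m" using m by simp
  ultimately have "u k \<le> 0" "w k \<le> 0" using uU[OF k] wW[OF k] uU[OF m0] wW[OF m0] u0[of 0] by linarith+
  then show ?thesis unfolding u_def w_def by auto
qed

lemma sol_bound:
  fixes x y :: "nat \<Rightarrow> complex"
  assumes g: "goodc m p q p' q' \<sigma>" and s0: "\<sigma> \<ge> 0" and s1: "\<sigma> \<le> 1/4" and m: "m \<ge> 1"
    and S: "sysE m p q p' q' x y (\<lambda>_. 1) (\<lambda>_. 0)" and k: "k < m"
  shows "cmod (x k - 1) \<le> 4 * \<sigma> \<and> cmod (y k) \<le> 4 * \<sigma>"
proof -
  define u where "u j = cmod (x j - 1)" for j
  define w where "w j = cmod (y j)" for j
  let ?U = "Max (u ` {..<m})" and ?W = "Max (w ` {..<m})"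
  have uU: "u j \<le> ?U" if "j < m" for j using that by (intro Max_ge) auto
  have wW: "w j \<le> ?W" if "j < m" for j using that by (intro Max_ge) auto
  have u0: "u j \<ge> 0" "w j \<ge> 0" for j unfolding u_def w_def by auto
  have xb: "cmod (x j) \<le> 1 + u j" for j unfolding u_def using norm_triangle_ineq[of "x j - 1" 1] by simp
  have X: "cmod (x j) \<le> 1 + ?U + ?W" if "j < m" for j using xb[of j] uU[OF that] wW[OF that] u0[of j] by linarith
  have Y: "cmod (y j) \<le> 1 + ?U + ?W" if "j < m" for j using uU[OF that] wW[OF that] u0[of j] unfolding u_def w_def by linarith
  have "(1 - 2 * \<sigma>) * (?U + ?W) \<le> 2 * \<sigma>"
  proof (rule dom[OF m s0])
    show "2 * \<sigma> < 1" using s1 by simp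
    fix j assume j: "j < m"
    show "u j \<le> \<sigma> + \<sigma> * (?U + ?W)" using row_both(1)[OF g S j X Y] unfolding u_def by (simp add: algebra_simps)
    show "w j \<le> \<sigma> + \<sigma> * (?U + ?W)" using row_both(2)[OF g S j X Y] unfolding w_def by (simp add: algebra_simps)
  qed
  moreover have m0: "0 < m" using m by simp
  have UW0: "?U + ?W \<ge> 0" using uU[OF m0] wW[OF m0] u0[of 0] by linarith
  have "(1/2) * (?U + ?W) \<le> (1 - 2 * \<sigma>) * (?U + ?W)"
    using UW0 s1 by (intro mult_right_mono) auto
  then have "(1/2) * (?U + ?W) \<le> 2 * \<sigma>" using calculation(1) by (rule order_trans)
  then have S4: "?U + ?W \<le> 4 * \<sigma>" by simp
  have "u k \<le> 4 * \<sigma>" "w k \<le> 4 * \<sigma>" using S4 uU[OF k] wW[OF k] uU[OF m0] wW[OF m0] u0[of 0] by linarith+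
  then show ?thesis unfolding u_def w_def by auto
qed

lemma Im_sum_real: "Im (\<Sum>k<m. of_real (p k) * x k) = (\<Sum>k<m. p k * Im (x k))"
  by (simp add: Im_sum)

lemma real_sol:
  fixes x y :: "nat \<Rightarrow> complex"
  assumes g: "goodc m p q p' q' \<sigma>" and s0: "\<sigma> \<ge> 0" and s1: "\<sigma> \<le> 1/4" and m: "m \<ge> 1"
    and S: "sysE m p q p' q' x y (\<lambda>j. of_real (r1 j)) (\<lambda>j. of_real (r2 j))" and k: "k < m"
  shows "x k = of_real (Re (x k)) \<and> y k = of_real (Re (y k))"
proof -
  define x' where "x' j = complex_of_real (Im (x j))" for j
  define y' where "y' j = complex_of_real (Im (y j))" for j
  have S': "sysE m p q p' q' x' y' (\<lambda>_. 0) (\<lambda>_. 0)"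
    unfolding sysE_def
  proof (intro allI impI conjI)
    fix j assume j: "j < m"
    have e1: "(\<Sum>k<m. of_real (p j k) * x k) + (\<Sum>k<m. of_real (q j k) * y k) = of_real (r1 j)"
     and e2: "(\<Sum>k<m. of_real (p' j k) * x k) + (\<Sum>k<m. of_real (q' j k) * y k) = of_real (r2 j)"
      using S j unfolding sysE_def by auto
    from arg_cong[OF e1, of Im] have i1: "(\<Sum>k<m. p j k * Im (x k)) + (\<Sum>k<m. q j k * Im (y k)) = 0"
      by (simp add: Im_sum)
    from arg_cong[OF e2, of Im] have i2: "(\<Sum>k<m. p' j k * Im (x k)) + (\<Sum>k<m. q' j k * Im (y k)) = 0"
      by (simp add: Im_sum)
    show "(\<Sum>k<m. of_real (p j k) * x' k) + (\<Sum>k<m. of_real (q j k) * y' k) = 0"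
      unfolding x'_def y'_def using arg_cong[OF i1, of complex_of_real] by simp
    show "(\<Sum>k<m. of_real (p' j k) * x' k) + (\<Sum>k<m. of_real (q' j k) * y' k) = 0"
      unfolding x'_def y'_def using arg_cong[OF i2, of complex_of_real] by simp
  qed
  from kernel_cx[OF g s0 s1 m S' k] have "Im (x k) = 0" "Im (y k) = 0"
    unfolding x'_def y'_def by auto
  then show ?thesis by (simp add: complex_eq_iff)
qed



definition MM :: "nat \<Rightarrow> nat \<Rightarrow> (nat \<Rightarrow> real) \<Rightarrow> complex mat" where
  "MM n m \<tau> = four_block_mat (kmat (dirichlet n) m \<tau>)
                ((complex_of_real (1 / sqrt (cmod (dirichlet2 n 0)))) \<cdot>\<^sub>m kmat (dirichlet1 n) m \<tau>)
                ((- complex_of_real (1 / sqrt (cmod (dirichlet2 n 0)))) \<cdot>\<^sub>m kmat (dirichlet1 n) m \<tau>)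
                ((- complex_of_real (1 / cmod (dirichlet2 n 0))) \<cdot>\<^sub>m kmat (dirichlet2 n) m \<tau>)"

definition pc where "pc n \<tau> j k = R0 n (\<tau> j - \<tau> k)"
definition qc where "qc n \<tau> j k = R1 n (\<tau> j - \<tau> k) / sqrt (cc n)"
definition pc' where "pc' n \<tau> j k = - R1 n (\<tau> j - \<tau> k) / sqrt (cc n)"
definition qc' where "qc' n \<tau> j k = - R2 n (\<tau> j - \<tau> k) / cc n"

lemma kmat_carrier[simp]: "kmat f m \<tau> \<in> carrier_mat m m" unfolding kmat_def by simp
lemma kmat_dims[simp]: "dim_row (kmat f m \<tau>) = m" "dim_col (kmat f m \<tau>) = m" unfolding kmat_def by simp_all

lemma MM_carrier: "MM n m \<tau> \<in> carrier_mat (m+m) (m+m)"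
  unfolding MM_def by (rule four_block_carrier_mat) auto

lemma mv_index: "X \<in> carrier_mat m m \<Longrightarrow> v \<in> carrier_vec m \<Longrightarrow> j < m \<Longrightarrow>
   (X *\<^sub>v v) $ j = (\<Sum>k<m. X $$ (j,k) * v $ k)"
  by (auto simp: scalar_prod_def lessThan_atLeast0 intro!: sum.cong)

lemma MM_mult:
  assumes x: "x \<in> carrier_vec m" and y: "y \<in> carrier_vec m"
  shows "MM n m \<tau> *\<^sub>v (x @\<^sub>v y) =
     vec m (\<lambda>j. (\<Sum>k<m. of_real (pc n \<tau> j k) * x $ k) + (\<Sum>k<m. of_real (qc n \<tau> j k) * y $ k)) @\<^sub>v
     vec m (\<lambda>j. (\<Sum>k<m. of_real (pc' n \<tau> j k) * x $ k) + (\<Sum>k<m. of_real (qc' n \<tau> j k) * y $ k))"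
proof -
  let ?c = "cmod (dirichlet2 n 0)"
  have c: "?c = cc n" by (rule cmod_dirichlet2_0)
  let ?A = "kmat (dirichlet n) m \<tau>"
  let ?B = "(complex_of_real (1 / sqrt ?c)) \<cdot>\<^sub>m kmat (dirichlet1 n) m \<tau>"
  let ?C = "(- complex_of_real (1 / sqrt ?c)) \<cdot>\<^sub>m kmat (dirichlet1 n) m \<tau>"
  let ?D = "(- complex_of_real (1 / ?c)) \<cdot>\<^sub>m kmat (dirichlet2 n) m \<tau>"
  have "MM n m \<tau> *\<^sub>v (x @\<^sub>v y) = (?A *\<^sub>v x + ?B *\<^sub>v y) @\<^sub>v (?C *\<^sub>v x + ?D *\<^sub>v y)"
    unfolding MM_def by (rule four_block_mat_mult_vec) (auto simp: x y)
  also have "?A *\<^sub>v x + ?B *\<^sub>v y = vec m (\<lambda>j. (\<Sum>k<m. of_real (pc n \<tau> j k) * x $ k) + (\<Sum>k<m. of_real (qc n \<tau> j k) * y $ k))"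
  proof (rule eq_vecI)
    fix j assume "j < dim_vec (vec m (\<lambda>j. (\<Sum>k<m. of_real (pc n \<tau> j k) * x $ k) + (\<Sum>k<m. of_real (qc n \<tau> j k) * y $ k)))"
    then have j: "j < m" by simp
    have "(?A *\<^sub>v x + ?B *\<^sub>v y) $ j = (?A *\<^sub>v x) $ j + (?B *\<^sub>v y) $ j" using j by simp
    also have "\<dots> = (\<Sum>k<m. ?A $$ (j,k) * x $ k) + (\<Sum>k<m. ?B $$ (j,k) * y $ k)"
      using mv_index[of ?A m x j] mv_index[of ?B m y j] j x y by simp
    also have "\<dots> = (\<Sum>k<m. of_real (pc n \<tau> j k) * x $ k) + (\<Sum>k<m. of_real (qc n \<tau> j k) * y $ k)"
      using j by (auto simp: kmat_def pc_def qc_def c dirichlet_R0 dirichlet1_R1 R2_0 abs_of_nonneg[OF cc_nonneg] intro!: sum.cong arg_cong2[where f="(+)"])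
    finally show "(?A *\<^sub>v x + ?B *\<^sub>v y) $ j = vec m (\<lambda>j. (\<Sum>k<m. of_real (pc n \<tau> j k) * x $ k) + (\<Sum>k<m. of_real (qc n \<tau> j k) * y $ k)) $ j"
      using j by simp
  qed (use x in simp)
  also have "?C *\<^sub>v x + ?D *\<^sub>v y = vec m (\<lambda>j. (\<Sum>k<m. of_real (pc' n \<tau> j k) * x $ k) + (\<Sum>k<m. of_real (qc' n \<tau> j k) * y $ k))"
  proof (rule eq_vecI)
    fix j assume "j < dim_vec (vec m (\<lambda>j. (\<Sum>k<m. of_real (pc' n \<tau> j k) * x $ k) + (\<Sum>k<m. of_real (qc' n \<tau> j k) * y $ k)))"
    then have j: "j < m" by simp
    have "(?C *\<^sub>v x + ?D *\<^sub>v y) $ j = (?C *\<^sub>v x) $ j + (?D *\<^sub>v y) $ j" using j by simp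
    also have "\<dots> = (\<Sum>k<m. ?C $$ (j,k) * x $ k) + (\<Sum>k<m. ?D $$ (j,k) * y $ k)"
      using mv_index[of ?C m x j] mv_index[of ?D m y j] j x y by simp
    also have "\<dots> = (\<Sum>k<m. of_real (pc' n \<tau> j k) * x $ k) + (\<Sum>k<m. of_real (qc' n \<tau> j k) * y $ k)"
      using j by (auto simp: kmat_def pc'_def qc'_def c dirichlet1_R1 dirichlet2_R2 R2_0 abs_of_nonneg[OF cc_nonneg] intro!: sum.cong arg_cong2[where f="(+)"])
    finally show "(?C *\<^sub>v x + ?D *\<^sub>v y) $ j = vec m (\<lambda>j. (\<Sum>k<m. of_real (pc' n \<tau> j k) * x $ k) + (\<Sum>k<m. of_real (qc' n \<tau> j k) * y $ k)) $ j"
      using j by simp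
  qed (use x in simp)
  finally show ?thesis .
qed


lemma MM_sys:
  assumes x: "x \<in> carrier_vec m" and y: "y \<in> carrier_vec m"
    and r1: "r1 \<in> carrier_vec m" and r2: "r2 \<in> carrier_vec m"
  shows "MM n m \<tau> *\<^sub>v (x @\<^sub>v y) = r1 @\<^sub>v r2 \<longleftrightarrow>
    sysE m (pc n \<tau>) (qc n \<tau>) (pc' n \<tau>) (qc' n \<tau>) (\<lambda>k. x $ k) (\<lambda>k. y $ k) (\<lambda>j. r1 $ j) (\<lambda>j. r2 $ j)"
proof -
  let ?v1 = "vec m (\<lambda>j. (\<Sum>k<m. of_real (pc n \<tau> j k) * x $ k) + (\<Sum>k<m. of_real (qc n \<tau> j k) * y $ k))"
  let ?v2 = "vec m (\<lambda>j. (\<Sum>k<m. of_real (pc' n \<tau> j k) * x $ k) + (\<Sum>k<m. of_real (qc' n \<tau> j k) * y $ k))"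
  have "MM n m \<tau> *\<^sub>v (x @\<^sub>v y) = r1 @\<^sub>v r2 \<longleftrightarrow> ?v1 @\<^sub>v ?v2 = r1 @\<^sub>v r2"
    unfolding MM_mult[OF x y] ..
  also have "\<dots> \<longleftrightarrow> ?v1 = r1 \<and> ?v2 = r2"
    by (rule append_vec_eq) (use r1 in auto)
  also have "\<dots> \<longleftrightarrow> sysE m (pc n \<tau>) (qc n \<tau>) (pc' n \<tau>) (qc' n \<tau>) (\<lambda>k. x $ k) (\<lambda>k. y $ k) (\<lambda>j. r1 $ j) (\<lambda>j. r2 $ j)"
    unfolding sysE_def vec_eq_iff using r1 r2 by auto
  finally show ?thesis .
qed

lemma cc_pos: "n \<ge> 1 \<Longrightarrow> cc n > 0"
proof -
  assume "n \<ge> 1"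
  then have "(real n)^2 > 0" by simp
  then show ?thesis using cc_ge[of n] by linarith
qed

lemma goodc_diag:
  assumes "n \<ge> 1"
  shows "pc n \<tau> j j = 1" "qc n \<tau> j j = 0" "pc' n \<tau> j j = 0" "qc' n \<tau> j j = 1"
  using cc_pos[OF assms] by (simp_all add: pc_def qc_def pc'_def qc'_def R0_0 R1_0 R2_0)

lemma zero_split: "0\<^sub>v (m+m) = 0\<^sub>v m @\<^sub>v (0\<^sub>v m :: 'a :: zero vec)"
  by (rule eq_vecI) auto

lemma MM_inj:
  assumes n: "n \<ge> 1" and m: "m \<ge> 1" and g: "goodc m (pc n \<tau>) (qc n \<tau>) (pc' n \<tau>) (qc' n \<tau>) \<sigma>"
    and s: "0 \<le> \<sigma>" "\<sigma> \<le> 1/4"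
    and z: "z \<in> carrier_vec (m+m)" and Mz: "MM n m \<tau> *\<^sub>v z = 0\<^sub>v (m+m)"
  shows "z = 0\<^sub>v (m+m)"
proof -
  define x where "x = vec_first z m"
  define y where "y = vec_last z m"
  have zs: "z = x @\<^sub>v y" unfolding x_def y_def using z by simp
  have xc: "x \<in> carrier_vec m" and yc: "y \<in> carrier_vec m" unfolding x_def y_def by auto
  have "MM n m \<tau> *\<^sub>v (x @\<^sub>v y) = 0\<^sub>v m @\<^sub>v 0\<^sub>v m" using Mz zs zero_split by metis
  then have S: "sysE m (pc n \<tau>) (qc n \<tau>) (pc' n \<tau>) (qc' n \<tau>) (\<lambda>k. x $ k) (\<lambda>k. y $ k) (\<lambda>j. 0) (\<lambda>j. 0)"
    using MM_sys[OF xc yc, of "0\<^sub>v m" "0\<^sub>v m" n \<tau>] unfolding sysE_def by auto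
  have "x = 0\<^sub>v m" "y = 0\<^sub>v m"
    using kernel_cx[OF g s m S] xc yc by (auto intro!: eq_vecI)
  then show ?thesis using zs zero_split by metis
qed

lemma MM_unit:
  assumes n: "n \<ge> 1" and m: "m \<ge> 1" and g: "goodc m (pc n \<tau>) (qc n \<tau>) (pc' n \<tau>) (qc' n \<tau>) \<sigma>"
    and s: "0 \<le> \<sigma>" "\<sigma> \<le> 1/4"
  shows "\<exists>B. B \<in> carrier_mat (m+m) (m+m) \<and> MM n m \<tau> * B = 1\<^sub>m (m+m) \<and> B * MM n m \<tau> = 1\<^sub>m (m+m)"
proof -
  have C: "MM n m \<tau> \<in> carrier_mat (m+m) (m+m)" by (rule MM_carrier)
  have "Determinant.det (MM n m \<tau>) \<noteq> 0"
  proof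
    assume "Determinant.det (MM n m \<tau>) = 0"
    then obtain v where v: "v \<in> carrier_vec (m+m)" "v \<noteq> 0\<^sub>v (m+m)" "MM n m \<tau> *\<^sub>v v = 0\<^sub>v (m+m)"
      using det_0_iff_vec_prod_zero[OF C] by auto
    then show False using MM_inj[OF n m g s v(1) v(3)] by simp
  qed
  from det_non_zero_imp_unit[OF C this, of "()"]
  show ?thesis unfolding Units_def ring_mat_def by auto
qed

lemma MM_invertible:
  assumes n: "n \<ge> 1" and m: "m \<ge> 1" and g: "goodc m (pc n \<tau>) (qc n \<tau>) (pc' n \<tau>) (qc' n \<tau>) \<sigma>"
    and s: "0 \<le> \<sigma>" "\<sigma> \<le> 1/4"
  shows "invertible_mat (MM n m \<tau>)"
proof -
  obtain B where B: "B \<in> carrier_mat (m+m) (m+m)" "MM n m \<tau> * B = 1\<^sub>m (m+m)" "B * MM n m \<tau> = 1\<^sub>m (m+m)"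
    using MM_unit[OF n m g s] by blast
  have C: "MM n m \<tau> \<in> carrier_mat (m+m) (m+m)" by (rule MM_carrier)
  show ?thesis unfolding invertible_mat_def inverts_mat_def
    using B C by (auto intro!: exI[of _ B])
qed


lemma MM_solution:
  assumes n: "n \<ge> 1" and m: "m \<ge> 1" and g: "goodc m (pc n \<tau>) (qc n \<tau>) (pc' n \<tau>) (qc' n \<tau>) \<sigma>"
    and s: "0 \<le> \<sigma>" "\<sigma> \<le> 1/4"
  shows "\<exists>!ab. fst ab \<in> carrier_vec m \<and> snd ab \<in> carrier_vec m \<and>
      MM n m \<tau> *\<^sub>v (fst ab @\<^sub>v (complex_of_real (sqrt (cmod (dirichlet2 n 0))) \<cdot>\<^sub>v snd ab))
        = vec m (\<lambda>_. 1) @\<^sub>v 0\<^sub>v m"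
proof -
  let ?c = "cmod (dirichlet2 n 0)"
  let ?s = "complex_of_real (sqrt ?c)"
  have c: "?c = cc n" by (rule cmod_dirichlet2_0)
  have s0: "?s \<noteq> 0" using cc_pos[OF n] c by simp
  obtain B where B: "B \<in> carrier_mat (m+m) (m+m)" "MM n m \<tau> * B = 1\<^sub>m (m+m)" "B * MM n m \<tau> = 1\<^sub>m (m+m)"
    using MM_unit[OF n m g s] by blast
  have C: "MM n m \<tau> \<in> carrier_mat (m+m) (m+m)" by (rule MM_carrier)
  define rhs :: "complex vec" where "rhs = vec m (\<lambda>_. 1) @\<^sub>v 0\<^sub>v m"
  have rc: "rhs \<in> carrier_vec (m+m)" unfolding rhs_def by auto
  define z where "z = B *\<^sub>v rhs"
  have zc: "z \<in> carrier_vec (m+m)" unfolding z_def using B rc by auto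
  have Mz: "MM n m \<tau> *\<^sub>v z = rhs"
    unfolding z_def using assoc_mult_mat_vec[OF C B(1) rc, symmetric] B(2) rc by simp
  have bk: "w = B *\<^sub>v (MM n m \<tau> *\<^sub>v w)" if "w \<in> carrier_vec (m+m)" for w
    using assoc_mult_mat_vec[OF B(1) C that] B(3) that by simp
  define a where "a = vec_first z m"
  define b where "b = complex_of_real (1 / sqrt ?c) \<cdot>\<^sub>v vec_last z m"
  have sb: "?s \<cdot>\<^sub>v b = vec_last z m"
    unfolding b_def by (rule eq_vecI) (use s0 in \<open>auto simp: of_real_def[symmetric] field_simps\<close>)
  have ex: "a \<in> carrier_vec m \<and> b \<in> carrier_vec m \<and> MM n m \<tau> *\<^sub>v (a @\<^sub>v (?s \<cdot>\<^sub>v b)) = rhs"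
    unfolding sb a_def using zc Mz by (auto simp: b_def)
  show ?thesis unfolding rhs_def[symmetric]
  proof (rule ex1I[of _ "(a,b)"])
    show "fst (a,b) \<in> carrier_vec m \<and> snd (a,b) \<in> carrier_vec m \<and> MM n m \<tau> *\<^sub>v (fst (a,b) @\<^sub>v (?s \<cdot>\<^sub>v snd (a,b))) = rhs"
      using ex by simp
  next
    fix ab assume h: "fst ab \<in> carrier_vec m \<and> snd ab \<in> carrier_vec m \<and> MM n m \<tau> *\<^sub>v (fst ab @\<^sub>v (?s \<cdot>\<^sub>v snd ab)) = rhs"
    obtain a' b' where ab: "ab = (a', b')" by (cases ab)
    have h': "a' \<in> carrier_vec m" "b' \<in> carrier_vec m" "MM n m \<tau> *\<^sub>v (a' @\<^sub>v (?s \<cdot>\<^sub>v b')) = rhs"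
      using h ab by auto
    have w1: "a' @\<^sub>v (?s \<cdot>\<^sub>v b') \<in> carrier_vec (m+m)" using h' by auto
    have w2: "a @\<^sub>v (?s \<cdot>\<^sub>v b) \<in> carrier_vec (m+m)" using ex by auto
    have "a' @\<^sub>v (?s \<cdot>\<^sub>v b') = a @\<^sub>v (?s \<cdot>\<^sub>v b)"
      using bk[OF w1] bk[OF w2] h'(3) ex by simp
    then have e: "a' = a" "?s \<cdot>\<^sub>v b' = ?s \<cdot>\<^sub>v b"
      using append_vec_eq[of a' m a] h' ex by auto
    have "b' = b"
    proof (rule eq_vecI)
      fix i assume "i < dim_vec b"
      then have i: "i < m" using ex by auto
      have "?s * b' $ i = ?s * b $ i" using arg_cong[OF e(2), of "\<lambda>v. v $ i"] i h' ex by auto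
      then show "b' $ i = b $ i" using s0 by simp
    qed (use h' ex in auto)
    then show "ab = (a, b)" using ab e by simp
  qed
qed

lemma MM_sol_sys:
  fixes a b :: "complex vec"
  assumes a: "a \<in> carrier_vec m" and b: "b \<in> carrier_vec m"
    and eq: "MM n m \<tau> *\<^sub>v (a @\<^sub>v (complex_of_real (sqrt (cmod (dirichlet2 n 0))) \<cdot>\<^sub>v b)) = vec m (\<lambda>_. 1) @\<^sub>v 0\<^sub>v m"
  shows "sysE m (pc n \<tau>) (qc n \<tau>) (pc' n \<tau>) (qc' n \<tau>) (\<lambda>k. a $ k)
          (\<lambda>k. complex_of_real (sqrt (cc n)) * b $ k) (\<lambda>_. 1) (\<lambda>_. 0)"
proof -
  have c: "cmod (dirichlet2 n 0) = cc n" by (rule cmod_dirichlet2_0)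
  have sb: "complex_of_real (sqrt (cmod (dirichlet2 n 0))) \<cdot>\<^sub>v b \<in> carrier_vec m" using b by simp
  from MM_sys[OF a sb, of "vec m (\<lambda>_. 1)" "0\<^sub>v m" n \<tau>] eq
  have "sysE m (pc n \<tau>) (qc n \<tau>) (pc' n \<tau>) (qc' n \<tau>) (\<lambda>k. a $ k)
          (\<lambda>k. (complex_of_real (sqrt (cmod (dirichlet2 n 0))) \<cdot>\<^sub>v b) $ k) (\<lambda>j. vec m (\<lambda>_. 1) $ j) (\<lambda>j. 0\<^sub>v m $ j)"
    by simp
  then show ?thesis unfolding sysE_def c using b by auto
qed



lemma sum_over:
  fixes f g :: "nat \<Rightarrow> real"
  assumes "\<And>k. k \<in> K \<Longrightarrow> \<bar>f k\<bar> \<le> A * g k" "(\<Sum>k\<in>K. g k) \<le> T" "A \<ge> 0"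
  shows "(\<Sum>k\<in>K. \<bar>f k\<bar>) \<le> A * T"
proof -
  have "(\<Sum>k\<in>K. \<bar>f k\<bar>) \<le> (\<Sum>k\<in>K. A * g k)" using assms(1) by (rule sum_mono)
  also have "\<dots> = A * (\<Sum>k\<in>K. g k)" by (simp add: sum_distrib_left)
  also have "\<dots> \<le> A * T" using assms(2,3) by (rule mult_left_mono)
  finally show ?thesis .
qed

lemma sin_bound_to_am:
  assumes "abs_mod1 x > 0" "sin (pi * x) \<noteq> 0 \<Longrightarrow> \<bar>f\<bar> \<le> A / \<bar>sin (pi * x)\<bar>" "A \<ge> 0"
  shows "\<bar>f\<bar> \<le> A * (1 / abs_mod1 x)"
proof -
  have s: "\<bar>sin (pi * x)\<bar> \<ge> abs_mod1 x" using sin_am[of x] assms(1) by linarith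
  then have "sin (pi * x) \<noteq> 0" using assms(1) by auto
  then have "\<bar>f\<bar> \<le> A / \<bar>sin (pi * x)\<bar>" using assms(2) by blast
  also have "\<dots> \<le> A / abs_mod1 x" using s assms(1,3) by (intro divide_left_mono) auto
  finally show ?thesis by simp
qed

lemma lin_tail:
  fixes ar br f g :: "nat \<Rightarrow> real"
  assumes "\<And>k. k \<in> K \<Longrightarrow> \<bar>ar k\<bar> \<le> P" "\<And>k. k \<in> K \<Longrightarrow> \<bar>br k\<bar> \<le> Q"
    "(\<Sum>k\<in>K. \<bar>f k\<bar>) \<le> F" "(\<Sum>k\<in>K. \<bar>g k\<bar>) \<le> G" "P \<ge> 0" "Q \<ge> 0"
  shows "\<bar>\<Sum>k\<in>K. ar k * f k + br k * g k\<bar> \<le> P * F + Q * G"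
proof -
  have "\<bar>\<Sum>k\<in>K. ar k * f k + br k * g k\<bar> \<le> (\<Sum>k\<in>K. \<bar>ar k * f k + br k * g k\<bar>)" by (rule sum_abs)
  also have "\<dots> \<le> (\<Sum>k\<in>K. P * \<bar>f k\<bar> + Q * \<bar>g k\<bar>)"
  proof (rule sum_mono)
    fix k assume k: "k \<in> K"
    have "\<bar>ar k * f k + br k * g k\<bar> \<le> \<bar>ar k\<bar> * \<bar>f k\<bar> + \<bar>br k\<bar> * \<bar>g k\<bar>"
      by (metis abs_mult abs_triangle_ineq)
    also have "\<dots> \<le> P * \<bar>f k\<bar> + Q * \<bar>g k\<bar>"
      using assms(1,2)[OF k] by (intro add_mono mult_right_mono) auto
    finally show "\<bar>ar k * f k + br k * g k\<bar> \<le> P * \<bar>f k\<bar> + Q * \<bar>g k\<bar>" .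
  qed
  also have "\<dots> = P * (\<Sum>k\<in>K. \<bar>f k\<bar>) + Q * (\<Sum>k\<in>K. \<bar>g k\<bar>)"
    by (simp add: sum.distrib sum_distrib_left)
  also have "\<dots> \<le> P * F + Q * G" using assms(3-6) by (intro add_mono mult_left_mono) auto
  finally show ?thesis .
qed

locale kset =
  fixes n m :: nat and \<tau> :: "nat \<Rightarrow> real"
  assumes n1: "n \<ge> 1" and m1: "m \<ge> 1"
    and sep: "\<forall>j<m. \<forall>k<m. j \<noteq> k \<longrightarrow> abs_mod1 (\<tau> j - \<tau> k) \<ge> (10^6::real) * (1 / real n) * ln (real m)"
begin

definition Dl where "Dl = (10^6::real) * (1 / real n) * ln (real m)"
definition e where "e = (if m = 1 then 0 else (20::real) / 10^6)"

lemma sepD: "j < m \<Longrightarrow> k < m \<Longrightarrow> j \<noteq> k \<Longrightarrow> abs_mod1 (\<tau> j - \<tau> k) \<ge> Dl"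
  using sep unfolding Dl_def by blast

lemma e_nonneg: "e \<ge> 0" unfolding e_def by simp
lemma e_small: "e \<le> 2 / 10^5" unfolding e_def by simp
lemma Dl_nonneg: "Dl \<ge> 0" unfolding Dl_def using m1 by simp

lemma m2_facts:
  assumes m2: "m \<ge> 2"
  shows "ln (real m) \<ge> 2/3" "Dl > 0" "real n \<ge> 10^6" "Dl \<ge> 1 / (2 * real (2*n+1))"
proof -
  have "ln (real m) \<ge> ln 2" using m2 by simp
  then show L: "ln (real m) \<ge> 2/3" using ln2_ge_two_thirds by linarith
  show D: "Dl > 0" unfolding Dl_def using L n1 by simp
  have "Dl \<le> abs_mod1 (\<tau> 0 - \<tau> 1)" using sepD[of 0 1] m2 by simp
  also have "\<dots> \<le> 1/2" by (rule am_half)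
  finally have "Dl \<le> 1/2" .
  then have "10^6 * ln (real m) \<le> real n / 2" unfolding Dl_def using n1 by (simp add: field_simps)
  moreover have "10^6 * ln (real m) \<ge> 10^6 * (2/3)" using L by simp
  ultimately show "real n \<ge> 10^6" by simp
  have "1 / (2 * real (2*n+1)) \<le> 1 / real n" using n1 by (simp add: field_simps)
  also have "1 / real n \<le> Dl" unfolding Dl_def using L n1 by (simp add: field_simps)
  finally show "Dl \<ge> 1 / (2 * real (2*n+1))" .
qed

lemma tail:
  assumes j: "j < m" and far: "\<And>k. k \<in> {..<m}-{j} \<Longrightarrow> abs_mod1 (\<theta> - \<tau> k) \<ge> Dl / 2"
  shows "(\<Sum>k\<in>{..<m}-{j}. 1 / abs_mod1 (\<theta> - \<tau> k)) \<le> e * real n"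
proof (cases "m = 1")
  case True
  then have E: "{..<m}-{j} = {}" using j by auto
  show ?thesis unfolding E using e_nonneg n1 by simp
next
  case False
  then have m2: "m \<ge> 2" using m1 by simp
  note F = m2_facts[OF m2]
  have "(\<Sum>k\<in>{..<m}-{j}. 1 / abs_mod1 (\<theta> - \<tau> k)) \<le> 6 / Dl * (1 + ln (real m))"
    by (rule sep_sum[OF F(2) m1 sepD]) (use far in auto)
  also have "6 / Dl * (1 + ln (real m)) = 6 * real n * (1 + ln (real m)) / (10^6 * ln (real m))"
    unfolding Dl_def using n1 F(1) by (simp add: field_simps)
  also have "\<dots> \<le> 20 * real n / 10^6"
  proof -
    have "6 * (1 + ln (real m)) \<le> 20 * ln (real m)" using F(1) by simp
    then have "6 * real n * (1 + ln (real m)) \<le> 20 * real n * ln (real m)" using n1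
      by (metis mult.assoc mult.left_commute mult_left_mono of_nat_0_le_iff)
    then show ?thesis using F(1) by (simp add: field_simps)
  qed
  also have "\<dots> = e * real n" unfolding e_def using False by simp
  finally show ?thesis .
qed


lemma tail_pos:
  assumes j: "j < m" and far: "\<And>k. k \<in> {..<m}-{j} \<Longrightarrow> abs_mod1 (\<theta> - \<tau> k) \<ge> Dl / 2"
    and k: "k \<in> {..<m}-{j}"
  shows "abs_mod1 (\<theta> - \<tau> k) > 0"
proof -
  have "m \<noteq> 1" using j k by auto
  then have "Dl > 0" using m2_facts(2) m1 by simp
  then show ?thesis using far[OF k] by linarith
qed

lemma tailR:
  assumes j: "j < m" and far: "\<And>k. k \<in> {..<m}-{j} \<Longrightarrow> abs_mod1 (\<theta> - \<tau> k) \<ge> Dl / 2"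
  shows "(\<Sum>k\<in>{..<m}-{j}. \<bar>R0 n (\<theta> - \<tau> k)\<bar>) \<le> 3 * e"
    "(\<Sum>k\<in>{..<m}-{j}. \<bar>R1 n (\<theta> - \<tau> k)\<bar>) \<le> 4 * pi * (e * real n)"
    "(\<Sum>k\<in>{..<m}-{j}. \<bar>R2 n (\<theta> - \<tau> k)\<bar>) \<le> 8 * pi^2 * real n * (e * real n)"
    "(\<Sum>k\<in>{..<m}-{j}. \<bar>R3 n (\<theta> - \<tau> k)\<bar>) \<le> 16 * pi^3 * (real n)^2 * (e * real n)"
proof -
  have T: "(\<Sum>k\<in>{..<m}-{j}. 1 / abs_mod1 (\<theta> - \<tau> k)) \<le> e * real n" by (rule tail[OF j far])
  have P: "abs_mod1 (\<theta> - \<tau> k) > 0" if "k \<in> {..<m}-{j}" for k by (rule tail_pos[OF j far that])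
  have b0: "\<bar>R0 n (\<theta> - \<tau> k)\<bar> \<le> (3 / real n) * (1 / abs_mod1 (\<theta> - \<tau> k))" if k: "k \<in> {..<m}-{j}" for k
  proof (rule sin_bound_to_am[OF P[OF k]])
    assume "sin (pi * (\<theta> - \<tau> k)) \<noteq> 0"
    from R0_abel[OF this n1] show "\<bar>R0 n (\<theta> - \<tau> k)\<bar> \<le> 3 / real n / \<bar>sin (pi * (\<theta> - \<tau> k))\<bar>"
      by (simp add: divide_divide_eq_left)
  qed (intro divide_nonneg_nonneg, auto)
  have b1: "\<bar>R1 n (\<theta> - \<tau> k)\<bar> \<le> (4 * pi) * (1 / abs_mod1 (\<theta> - \<tau> k))" if k: "k \<in> {..<m}-{j}" for k
    by (rule sin_bound_to_am[OF P[OF k]]) (use R1_abel in auto)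
  have b2: "\<bar>R2 n (\<theta> - \<tau> k)\<bar> \<le> (8 * pi^2 * real n) * (1 / abs_mod1 (\<theta> - \<tau> k))" if k: "k \<in> {..<m}-{j}" for k
    by (rule sin_bound_to_am[OF P[OF k]]) (use R2_abel in auto)
  have b3: "\<bar>R3 n (\<theta> - \<tau> k)\<bar> \<le> (16 * pi^3 * (real n)^2) * (1 / abs_mod1 (\<theta> - \<tau> k))" if k: "k \<in> {..<m}-{j}" for k
    by (rule sin_bound_to_am[OF P[OF k]]) (use R3_abel in auto)
  have "(\<Sum>k\<in>{..<m}-{j}. \<bar>R0 n (\<theta> - \<tau> k)\<bar>) \<le> (3 / real n) * (e * real n)"
    by (rule sum_over[OF b0 T]) (auto intro: divide_nonneg_nonneg)
  then show "(\<Sum>k\<in>{..<m}-{j}. \<bar>R0 n (\<theta> - \<tau> k)\<bar>) \<le> 3 * e" using n1 by simp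
  show "(\<Sum>k\<in>{..<m}-{j}. \<bar>R1 n (\<theta> - \<tau> k)\<bar>) \<le> 4 * pi * (e * real n)"
    by (rule sum_over[OF b1 T]) (use pi_gt_zero in auto)
  show "(\<Sum>k\<in>{..<m}-{j}. \<bar>R2 n (\<theta> - \<tau> k)\<bar>) \<le> 8 * pi^2 * real n * (e * real n)"
    by (rule sum_over[OF b2 T]) (use pi_gt_zero in auto)
  show "(\<Sum>k\<in>{..<m}-{j}. \<bar>R3 n (\<theta> - \<tau> k)\<bar>) \<le> 16 * pi^3 * (real n)^2 * (e * real n)"
    by (rule sum_over[OF b3 T]) (use pi_gt_zero in auto)
qed


lemma c_facts: "cc n > 0" "sqrt (cc n) \<ge> 3 * real n" "cc n \<ge> 9 * (real n)^2" "sqrt (cc n) > 0"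
  using cc_pos[OF n1] sqrt_cc_ge cc_ge by auto

lemma div_bound:
  fixes A X Y :: real
  assumes "A \<le> K * (e * real n) * real n ^ p" "Y \<ge> X * real n ^ Suc p" "X > 0" "K \<ge> 0"
  shows "A / Y \<le> K / X * e"
proof -
  have n0: "real n > 0" using n1 by simp
  have XP: "X * real n ^ Suc p > 0" using assms(3) n0 by simp
  have Y0: "Y > 0" using assms(2) XP by linarith
  have "A / Y \<le> (K * (e * real n) * real n ^ p) / Y" using assms(1) Y0 by (simp add: divide_right_mono)
  also have "\<dots> \<le> (K * (e * real n) * real n ^ p) / (X * real n ^ Suc p)"
    using assms(2) mult_pos_pos[OF Y0 XP] assms(4) e_nonneg n0 by (intro divide_left_mono mult_nonneg_nonneg) auto
  also have "\<dots> = K / X * e" using n0 assms(3) by (simp add: field_simps)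
  finally show ?thesis .
qed

lemma goodc_holds: "goodc m (pc n \<tau>) (qc n \<tau>) (pc' n \<tau>) (qc' n \<tau>) (13 * e)"
  unfolding goodc_def
proof (intro allI impI conjI)
  fix j assume j: "j < m"
  show "pc n \<tau> j j = 1" "qc n \<tau> j j = 0" "pc' n \<tau> j j = 0" "qc' n \<tau> j j = 1"
    by (auto simp: goodc_diag[OF n1])
  let ?K = "{..<m}-{j}"
  have far: "abs_mod1 (\<tau> j - \<tau> k) \<ge> Dl / 2" if "k \<in> ?K" for k
    using sepD[of j k] j that Dl_nonneg by auto
  note TR = tailR[OF j far]
  have p: "(\<Sum>k\<in>?K. \<bar>pc n \<tau> j k\<bar>) \<le> 3 * e" unfolding pc_def using TR(1) .
  have s1: "(\<Sum>k\<in>?K. \<bar>R1 n (\<tau> j - \<tau> k)\<bar>) / sqrt (cc n) \<le> (4 * pi) / 3 * e"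
    by (rule div_bound[where p=0]) (use TR(2) c_facts pi_gt_zero in auto)
  have s2: "(\<Sum>k\<in>?K. \<bar>R2 n (\<tau> j - \<tau> k)\<bar>) / cc n \<le> (8 * pi^2) / 9 * e"
    by (rule div_bound[where p=1]) (use TR(3) c_facts pi_gt_zero in \<open>auto simp: power2_eq_square mult_ac\<close>)
  have q: "(\<Sum>k\<in>?K. \<bar>qc n \<tau> j k\<bar>) = (\<Sum>k\<in>?K. \<bar>R1 n (\<tau> j - \<tau> k)\<bar>) / sqrt (cc n)"
    unfolding qc_def using c_facts by (simp add: sum_divide_distrib abs_divide)
  have p': "(\<Sum>k\<in>?K. \<bar>pc' n \<tau> j k\<bar>) = (\<Sum>k\<in>?K. \<bar>R1 n (\<tau> j - \<tau> k)\<bar>) / sqrt (cc n)"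
    unfolding pc'_def using c_facts by (simp add: sum_divide_distrib abs_divide)
  have q': "(\<Sum>k\<in>?K. \<bar>qc' n \<tau> j k\<bar>) = (\<Sum>k\<in>?K. \<bar>R2 n (\<tau> j - \<tau> k)\<bar>) / cc n"
    unfolding qc'_def using c_facts by (simp add: sum_divide_distrib abs_divide)
  have pi1: "(4 * pi) / 3 \<le> 419/100" using pi_approx by simp
  have pi2: "(8 * pi^2) / 9 \<le> 878/100"
  proof -
    have "pi^2 \<le> 3.1416^2" using pi_approx by (intro power_mono) auto
    then show ?thesis by (simp add: power2_eq_square)
  qed
  have e0: "e \<ge> 0" by (rule e_nonneg)
  have m1': "(4 * pi) / 3 * e \<le> (419/100) * e" using pi1 e0 by (rule mult_right_mono)
  have m2': "(8 * pi^2) / 9 * e \<le> (878/100) * e" using pi2 e0 by (rule mult_right_mono)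
  show "(\<Sum>k\<in>?K. \<bar>pc n \<tau> j k\<bar>) + (\<Sum>k\<in>?K. \<bar>qc n \<tau> j k\<bar>) \<le> 13 * e"
    using p s1 q m1' e0 by linarith
  show "(\<Sum>k\<in>?K. \<bar>pc' n \<tau> j k\<bar>) + (\<Sum>k\<in>?K. \<bar>qc' n \<tau> j k\<bar>) \<le> 13 * e"
    using s1 s2 p' q' m1' m2' e0 by linarith
qed


definition w where "w = 1 / (4 * real (2*n+1))"

lemma near_far:
  assumes j: "j < m" and t: "\<bar>t\<bar> \<le> w" and k: "k \<in> {..<m}-{j}"
  shows "abs_mod1 (\<tau> j + t - \<tau> k) \<ge> Dl / 2"
proof -
  have "m \<noteq> 1" using j k by auto
  then have m2: "m \<ge> 2" using m1 by simp
  have "Dl \<le> abs_mod1 (\<tau> j - \<tau> k)" using sepD[of j k] j k by auto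
  also have "\<dots> \<le> abs_mod1 (\<tau> j - (\<tau> j + t)) + abs_mod1 ((\<tau> j + t) - \<tau> k)" by (rule am_tri3)
  also have "abs_mod1 (\<tau> j - (\<tau> j + t)) \<le> \<bar>t\<bar>" using am_le[of "\<tau> j - (\<tau> j + t)" 0] by simp
  finally have "Dl \<le> \<bar>t\<bar> + abs_mod1 (\<tau> j + t - \<tau> k)" by simp
  moreover have "2 * w = 1 / (2 * real (2*n+1))" unfolding w_def by (simp add: field_simps)
  then have "Dl \<ge> 2 * w" using m2_facts(4)[OF m2] by simp
  ultimately show ?thesis using t by simp
qed

lemma argmin_far:
  assumes j: "j < m" and mn: "\<And>k. k < m \<Longrightarrow> abs_mod1 (\<theta> - \<tau> j) \<le> abs_mod1 (\<theta> - \<tau> k)"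
    and k: "k \<in> {..<m}-{j}"
  shows "abs_mod1 (\<theta> - \<tau> k) \<ge> Dl / 2"
proof -
  have "Dl \<le> abs_mod1 (\<tau> j - \<tau> k)" using sepD[of j k] j k by auto
  also have "\<dots> \<le> abs_mod1 (\<tau> j - \<theta>) + abs_mod1 (\<theta> - \<tau> k)" by (rule am_tri3)
  also have "abs_mod1 (\<tau> j - \<theta>) = abs_mod1 (\<theta> - \<tau> j)" by (rule am_sym)
  finally show ?thesis using mn[of k] k by simp
qed

end


lemma R0_chain: "(g has_real_derivative g') (at x) \<Longrightarrow> ((\<lambda>x. R0 n (g x)) has_real_derivative R1 n (g x) * g') (at x)"
  by (rule DERIV_chain2[OF R0_deriv])
lemma R1_chain: "(g has_real_derivative g') (at x) \<Longrightarrow> ((\<lambda>x. R1 n (g x)) has_real_derivative R2 n (g x) * g') (at x)"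
  by (rule DERIV_chain2[OF R1_deriv])
lemma R2_chain: "(g has_real_derivative g') (at x) \<Longrightarrow> ((\<lambda>x. R2 n (g x)) has_real_derivative R3 n (g x) * g') (at x)"
  by (rule DERIV_chain2[OF R2_deriv])

context kset begin

definition etar where "etar ar br \<theta> = (\<Sum>k<m. ar k * R0 n (\<theta> - \<tau> k)) + (\<Sum>k<m. br k * R1 n (\<theta> - \<tau> k))"
definition eta1 where "eta1 ar br \<theta> = (\<Sum>k<m. ar k * R1 n (\<theta> - \<tau> k)) + (\<Sum>k<m. br k * R2 n (\<theta> - \<tau> k))"
definition eta2 where "eta2 ar br \<theta> = (\<Sum>k<m. ar k * R2 n (\<theta> - \<tau> k)) + (\<Sum>k<m. br k * R3 n (\<theta> - \<tau> k))"

lemma etar_deriv: "((\<lambda>t. etar ar br (s + t)) has_real_derivative eta1 ar br (s + t)) (at t)"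
  unfolding etar_def eta1_def
  by (auto intro!: derivative_eq_intros R0_chain R1_chain simp: mult.commute)

lemma eta1_deriv: "((\<lambda>t. eta1 ar br (s + t)) has_real_derivative eta2 ar br (s + t)) (at t)"
  unfolding eta1_def eta2_def
  by (auto intro!: derivative_eq_intros R1_chain R2_chain simp: mult.commute)

lemma split_sum:
  fixes g :: "nat \<Rightarrow> real"
  assumes "j < m"
  shows "(\<Sum>k<m. g k) = g j + (\<Sum>k\<in>{..<m}-{j}. g k)"
  using sum.remove[of "{..<m}" j g] assms by simp

lemma split2:
  fixes f g :: "nat \<Rightarrow> real"
  assumes "j < m"
  shows "(\<Sum>k<m. f k) + (\<Sum>k<m. g k) = f j + g j + (\<Sum>k\<in>{..<m}-{j}. f k + g k)"
  using split_sum[OF assms, of f] split_sum[OF assms, of g] by (simp add: sum.distrib)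


definition hyp where "hyp ar br \<longleftrightarrow> (\<forall>k<m. \<bar>ar k - 1\<bar> \<le> 52 * e \<and> \<bar>br k\<bar> \<le> 52 * e / (3 * real n)) \<and>
   (\<forall>j<m. etar ar br (\<tau> j) = 1 \<and> eta1 ar br (\<tau> j) = 0)"

lemma pi_facts: "pi \<le> 3.1416" "pi^2 \<le> 9.87" "pi^3 \<le> 31.01" "pi \<ge> 3"
proof -
  show p: "pi \<le> 3.1416" using pi_approx by simp
  have "pi^2 \<le> 3.1416^2" using p by (intro power_mono) auto
  then show "pi^2 \<le> 9.87" by (simp add: power2_eq_square)
  have "pi^3 \<le> 3.1416^3" using p by (intro power_mono) auto
  then show "pi^3 \<le> 31.01" by (simp add: power3_eq_cube)
  show "pi \<ge> 3" using pi_gt3 by simp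
qed

lemma n_pos: "real n > 0" using n1 by simp

lemma tl0:
  assumes h: "hyp ar br" and j: "j < m" and far: "\<And>k. k \<in> {..<m}-{j} \<Longrightarrow> abs_mod1 (\<theta> - \<tau> k) \<ge> Dl / 2"
  shows "\<bar>\<Sum>k\<in>{..<m}-{j}. ar k * R0 n (\<theta> - \<tau> k) + br k * R1 n (\<theta> - \<tau> k)\<bar> \<le> 7 * e"
proof -
  note TR = tailR[OF j far]
  have e0: "e \<ge> 0" and es: "e \<le> 2/10^5" using e_nonneg e_small by auto
  have "\<bar>\<Sum>k\<in>{..<m}-{j}. ar k * R0 n (\<theta> - \<tau> k) + br k * R1 n (\<theta> - \<tau> k)\<bar>
      \<le> 2 * (3 * e) + (52 * e / (3 * real n)) * (4 * pi * (e * real n))"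
  proof (rule lin_tail[OF _ _ TR(1) TR(2)])
    fix k assume "k \<in> {..<m}-{j}"
    then have k: "k < m" by auto
    show "\<bar>ar k\<bar> \<le> 2" using h k es unfolding hyp_def by force
    show "\<bar>br k\<bar> \<le> 52 * e / (3 * real n)" using h k unfolding hyp_def by force
  qed (use e0 n_pos in auto)
  also have "(52 * e / (3 * real n)) * (4 * pi * (e * real n)) = (208 * pi / 3) * e * e"
    using n_pos by (simp add: field_simps)
  also have "(208 * pi / 3) * e * e \<le> 218 * e * e"
    using pi_facts e0 by (intro mult_right_mono) auto
  also have "218 * e * e \<le> 218 * (2/10^5) * e" using es e0 by (intro mult_right_mono mult_left_mono) auto
  finally show ?thesis by simp
qed

lemma tl2:
  assumes h: "hyp ar br" and j: "j < m" and far: "\<And>k. k \<in> {..<m}-{j} \<Longrightarrow> abs_mod1 (\<theta> - \<tau> k) \<ge> Dl / 2"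
  shows "\<bar>\<Sum>k\<in>{..<m}-{j}. ar k * R2 n (\<theta> - \<tau> k) + br k * R3 n (\<theta> - \<tau> k)\<bar> \<le> 159 * e * (real n)^2"
proof -
  note TR = tailR[OF j far]
  have e0: "e \<ge> 0" and es: "e \<le> 2/10^5" using e_nonneg e_small by auto
  have "\<bar>\<Sum>k\<in>{..<m}-{j}. ar k * R2 n (\<theta> - \<tau> k) + br k * R3 n (\<theta> - \<tau> k)\<bar>
      \<le> 2 * (8 * pi^2 * real n * (e * real n)) + (52 * e / (3 * real n)) * (16 * pi^3 * (real n)^2 * (e * real n))"
  proof (rule lin_tail[OF _ _ TR(3) TR(4)])
    fix k assume "k \<in> {..<m}-{j}"
    then have k: "k < m" by auto
    show "\<bar>ar k\<bar> \<le> 2" using h k es unfolding hyp_def by force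
    show "\<bar>br k\<bar> \<le> 52 * e / (3 * real n)" using h k unfolding hyp_def by force
  qed (use e0 n_pos in auto)
  also have "2 * (8 * pi^2 * real n * (e * real n)) = (16 * pi^2) * (e * (real n)^2)"
    by (simp add: power2_eq_square mult_ac)
  also have "(52 * e / (3 * real n)) * (16 * pi^3 * (real n)^2 * (e * real n)) = (832 * pi^3 / 3) * e * (e * (real n)^2)"
    using n_pos by (simp add: field_simps power2_eq_square)
  also have "(16 * pi^2) * (e * (real n)^2) \<le> 158 * (e * (real n)^2)"
    using pi_facts e0 by (intro mult_right_mono) auto
  also have "(832 * pi^3 / 3) * e * (e * (real n)^2) \<le> (8700 * (2/10^5)) * (e * (real n)^2)"
  proof (intro mult_right_mono)
    have "(832 * pi^3 / 3) \<le> 8700" using pi_facts by simp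
    then show "(832 * pi^3 / 3) * e \<le> 8700 * (2/10^5)" using es e0
      by (intro mult_mono) auto
  qed (use e0 in auto)
  finally show ?thesis by (simp add: algebra_simps)
qed


lemma hyp_coef:
  assumes h: "hyp ar br" and k: "k < m"
  shows "ar k \<ge> 1 - 52 * e" "\<bar>ar k\<bar> \<le> 1 + 52 * e" "\<bar>br k\<bar> \<le> 52 * e / (3 * real n)"
  using h k unfolding hyp_def by auto

lemma hyp_eq:
  assumes h: "hyp ar br" and j: "j < m"
  shows "etar ar br (\<tau> j) = 1" "eta1 ar br (\<tau> j) = 0"
  using h j unfolding hyp_def by auto

lemma eta2_neg:
  assumes h: "hyp ar br" and j: "j < m" and t: "\<bar>t\<bar> \<le> w"
  shows "eta2 ar br (\<tau> j + t) < 0"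
proof -
  let ?c = "cc n"
  have e0: "e \<ge> 0" and es: "e \<le> 2/10^5" using e_nonneg e_small by auto
  have sp: "eta2 ar br (\<tau> j + t) = ar j * R2 n t + br j * R3 n t +
     (\<Sum>k\<in>{..<m}-{j}. ar k * R2 n (\<tau> j + t - \<tau> k) + br k * R3 n (\<tau> j + t - \<tau> k))"
    unfolding eta2_def using split2[OF j, of "\<lambda>k. ar k * R2 n (\<tau> j + t - \<tau> k)" "\<lambda>k. br k * R3 n (\<tau> j + t - \<tau> k)"]
    by simp
  have T: "\<bar>\<Sum>k\<in>{..<m}-{j}. ar k * R2 n (\<tau> j + t - \<tau> k) + br k * R3 n (\<tau> j + t - \<tau> k)\<bar> \<le> 159 * e * (real n)^2"
    by (rule tl2[OF h j near_far[OF j t]])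
  have R2t: "R2 n t \<le> - ?c / 2" using R2_small t unfolding w_def by simp
  have c0: "?c > 0" using c_facts by simp
  have a1: "ar j \<ge> 1 - 52 * e" using hyp_coef[OF h j] by simp
  have a1': "1 - 52 * e \<ge> 0" using es by simp
  have t1: "ar j * R2 n t \<le> (1 - 52 * e) * R2 n t"
    using a1 R2t c0 by (intro mult_right_mono_neg) auto
  have t1': "(1 - 52 * e) * R2 n t \<le> (1 - 52 * e) * (- ?c / 2)"
    using R2t a1' by (intro mult_left_mono) auto
  have t2: "\<bar>br j * R3 n t\<bar> \<le> (52 * e / (3 * real n)) * (2 * pi * real n * ?c)"
    unfolding abs_mult using hyp_coef(3)[OF h j] R3_bound[of n t]
    by (intro mult_mono) auto
  have t2': "(52 * e / (3 * real n)) * (2 * pi * real n * ?c) = (104 * pi / 3) * (e * ?c)"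
    using n_pos by (simp add: field_simps)
  have t2'': "(104 * pi / 3) * (e * ?c) \<le> 109 * (e * ?c)"
    using pi_facts e0 c0 by (intro mult_right_mono) auto
  have t3: "159 * e * (real n)^2 \<le> 159 * e * (?c / 9)"
    using c_facts(3) e0 by (intro mult_left_mono) auto
  have ec: "e * ?c \<le> (2/10^5) * ?c" using es c0 by (intro mult_right_mono) auto
  have "eta2 ar br (\<tau> j + t) \<le> (1 - 52 * e) * (- ?c / 2) + 109 * (e * ?c) + 159 * e * (?c / 9)"
    using sp abs_le_D1[OF T] t1 t1' abs_le_D1[OF t2] t2' t2'' t3 by linarith
  also have "\<dots> = - ?c / 2 + 26 * (e * ?c) + 109 * (e * ?c) + (159/9) * (e * ?c)"
    by (simp add: algebra_simps)
  also have "\<dots> < 0" using ec c0 by simp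
  finally show ?thesis .
qed


lemma near_upper:
  assumes h: "hyp ar br" and j: "j < m" and t: "\<bar>t\<bar> \<le> w"
  shows "etar ar br (\<tau> j + t) \<le> 1"
proof -
  define f where "f t = etar ar br (\<tau> j + t)" for t
  define g where "g t = eta1 ar br (\<tau> j + t)" for t
  have df: "DERIV f x :> g x" for x unfolding f_def g_def by (rule etar_deriv)
  have dg: "DERIV g x :> eta2 ar br (\<tau> j + x)" for x unfolding g_def by (rule eta1_deriv)
  have f0: "f 0 = 1" unfolding f_def using hyp_eq[OF h j] by simp
  have g0: "g 0 = 0" unfolding g_def using hyp_eq[OF h j] by simp
  have neg: "eta2 ar br (\<tau> j + y) < 0" if "\<bar>y\<bar> \<le> w" for y using eta2_neg[OF h j that] .
  consider "t = 0" | "t > 0" | "t < 0" by linarith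
  then have "f t \<le> 1"
  proof cases
    case 1 then show ?thesis using f0 by simp
  next
    case 2
    obtain z where z: "0 < z" "z < t" "f t - f 0 = (t - 0) * g z"
      using MVT2[OF 2 df] by blast
    obtain y where y: "0 < y" "y < z" "g z - g 0 = (z - 0) * eta2 ar br (\<tau> j + y)"
      using MVT2[OF z(1) dg] by blast
    have "\<bar>y\<bar> \<le> w" using y z t by simp
    then have "eta2 ar br (\<tau> j + y) < 0" by (rule neg)
    then have "g z < 0" using y(3) z(1) g0 by (simp add: mult_pos_neg)
    then have "(t - 0) * g z < 0" using 2 by (simp add: mult_pos_neg)
    then show ?thesis using z(3) f0 by simp
  next
    case 3
    obtain z where z: "t < z" "z < 0" "f 0 - f t = (0 - t) * g z"
      using MVT2[OF 3 df] by blast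
    obtain y where y: "z < y" "y < 0" "g 0 - g z = (0 - z) * eta2 ar br (\<tau> j + y)"
      using MVT2[OF z(2) dg] by blast
    have "\<bar>y\<bar> \<le> w" using y z t by simp
    then have "eta2 ar br (\<tau> j + y) < 0" by (rule neg)
    then have "(0 - z) * eta2 ar br (\<tau> j + y) < 0" using z(2) by (simp add: mult_pos_neg mult_neg_neg)
    then have "g z > 0" using y(3) g0 by simp
    then have "(0 - t) * g z > 0" using 3 by (simp add: mult_neg_pos)
    then show ?thesis using z(3) f0 by simp
  qed
  then show ?thesis unfolding f_def .
qed

lemma near_lower:
  assumes h: "hyp ar br" and j: "j < m" and t: "\<bar>t\<bar> \<le> w"
  shows "etar ar br (\<tau> j + t) \<ge> -1"
proof -
  have e0: "e \<ge> 0" and es: "e \<le> 2/10^5" using e_nonneg e_small by auto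
  have sp: "etar ar br (\<tau> j + t) = ar j * R0 n t + br j * R1 n t +
     (\<Sum>k\<in>{..<m}-{j}. ar k * R0 n (\<tau> j + t - \<tau> k) + br k * R1 n (\<tau> j + t - \<tau> k))"
    unfolding etar_def using split2[OF j, of "\<lambda>k. ar k * R0 n (\<tau> j + t - \<tau> k)" "\<lambda>k. br k * R1 n (\<tau> j + t - \<tau> k)"]
    by simp
  have T: "\<bar>\<Sum>k\<in>{..<m}-{j}. ar k * R0 n (\<tau> j + t - \<tau> k) + br k * R1 n (\<tau> j + t - \<tau> k)\<bar> \<le> 7 * e"
    by (rule tl0[OF h j near_far[OF j t]])
  have a0: "ar j \<ge> 0" using hyp_coef(1)[OF h j] es by simp
  have r0: "R0 n t \<ge> 0" using R0_small_nonneg t unfolding w_def by simp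
  have t1: "ar j * R0 n t \<ge> 0" using a0 r0 by simp
  have t2: "\<bar>br j * R1 n t\<bar> \<le> (52 * e / (3 * real n)) * (2 * pi * real n)"
    unfolding abs_mult using hyp_coef(3)[OF h j] R1_bound[of n t]
    by (intro mult_mono) auto
  have t2': "(52 * e / (3 * real n)) * (2 * pi * real n) = (104 * pi / 3) * e"
    using n_pos by (simp add: field_simps)
  have t2'': "(104 * pi / 3) * e \<le> 109 * e"
    using pi_facts e0 by (intro mult_right_mono) auto
  have es': "e \<le> 1/50000" using es by simp
  show ?thesis using sp abs_le_D2[OF T] t1 abs_le_D2[OF t2] t2' t2'' es' by linarith
qed

lemma far_bound:
  assumes h: "hyp ar br" and j: "j < m"
    and mn: "\<And>k. k < m \<Longrightarrow> abs_mod1 (\<theta> - \<tau> j) \<le> abs_mod1 (\<theta> - \<tau> k)"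
    and fr: "abs_mod1 (\<theta> - \<tau> j) \<ge> w"
  shows "\<bar>etar ar br \<theta>\<bar> \<le> 1"
proof -
  have e0: "e \<ge> 0" and es: "e \<le> 2/10^5" using e_nonneg e_small by auto
  have sp: "etar ar br \<theta> = ar j * R0 n (\<theta> - \<tau> j) + br j * R1 n (\<theta> - \<tau> j) +
     (\<Sum>k\<in>{..<m}-{j}. ar k * R0 n (\<theta> - \<tau> k) + br k * R1 n (\<theta> - \<tau> k))"
    unfolding etar_def using split2[OF j, of "\<lambda>k. ar k * R0 n (\<theta> - \<tau> k)" "\<lambda>k. br k * R1 n (\<theta> - \<tau> k)"]
    by simp
  have T: "\<bar>\<Sum>k\<in>{..<m}-{j}. ar k * R0 n (\<theta> - \<tau> k) + br k * R1 n (\<theta> - \<tau> k)\<bar> \<le> 7 * e"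
    by (rule tl0[OF h j argmin_far[OF j mn]])
  have t2: "\<bar>br j * R1 n (\<theta> - \<tau> j)\<bar> \<le> (52 * e / (3 * real n)) * (2 * pi * real n)"
    unfolding abs_mult using hyp_coef(3)[OF h j] R1_bound[of n]
    by (intro mult_mono) auto
  have t2': "(52 * e / (3 * real n)) * (2 * pi * real n) = (104 * pi / 3) * e"
    using n_pos by (simp add: field_simps)
  have t2'': "(104 * pi / 3) * e \<le> 109 * e"
    using pi_facts e0 by (intro mult_right_mono) auto
  have t1: "\<bar>ar j * R0 n (\<theta> - \<tau> j)\<bar> \<le> (1 + 52 * e) * \<bar>R0 n (\<theta> - \<tau> j)\<bar>"
    unfolding abs_mult using hyp_coef(2)[OF h j] by (intro mult_right_mono) auto
  have main: "(1 + 52 * e) * \<bar>R0 n (\<theta> - \<tau> j)\<bar> + 109 * e + 7 * e \<le> 1"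
  proof (cases "m = 1")
    case True
    then have "e = 0" unfolding e_def by simp
    then show ?thesis using R0_le1 by simp
  next
    case False
    then have m2: "m \<ge> 2" using m1 by simp
    have n5: "n \<ge> 5" using m2_facts(3)[OF m2] by simp
    have "\<bar>R0 n (\<theta> - \<tau> j)\<bar> \<le> 0.98" by (rule R0_far[OF n5]) (use fr in \<open>simp add: w_def\<close>)
    moreover have "\<bar>R0 n (\<theta> - \<tau> j)\<bar> \<le> 1" by (rule R0_le1)
    moreover have "(52 * e) * \<bar>R0 n (\<theta> - \<tau> j)\<bar> \<le> (52 * e) * 1"
      using R0_le1 e0 by (intro mult_left_mono) auto
    moreover have "(1 + 52 * e) * \<bar>R0 n (\<theta> - \<tau> j)\<bar> = \<bar>R0 n (\<theta> - \<tau> j)\<bar> + (52 * e) * \<bar>R0 n (\<theta> - \<tau> j)\<bar>"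
      by (simp add: distrib_right)
    ultimately have "(1 + 52 * e) * \<bar>R0 n (\<theta> - \<tau> j)\<bar> \<le> 0.98 + 52 * e"
      by linarith
    then show ?thesis using es by simp
  qed
  have "\<bar>etar ar br \<theta>\<bar> \<le> \<bar>ar j * R0 n (\<theta> - \<tau> j)\<bar> + \<bar>br j * R1 n (\<theta> - \<tau> j)\<bar> +
     \<bar>\<Sum>k\<in>{..<m}-{j}. ar k * R0 n (\<theta> - \<tau> k) + br k * R1 n (\<theta> - \<tau> k)\<bar>"
  proof -
    let ?a = "ar j * R0 n (\<theta> - \<tau> j)" and ?b = "br j * R1 n (\<theta> - \<tau> j)"
      and ?c = "\<Sum>k\<in>{..<m}-{j}. ar k * R0 n (\<theta> - \<tau> k) + br k * R1 n (\<theta> - \<tau> k)"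
    have "\<bar>?a + ?b + ?c\<bar> \<le> \<bar>?a + ?b\<bar> + \<bar>?c\<bar>" by (rule abs_triangle_ineq)
    moreover have "\<bar>?a + ?b\<bar> \<le> \<bar>?a\<bar> + \<bar>?b\<bar>" by (rule abs_triangle_ineq)
    ultimately show ?thesis unfolding sp by linarith
  qed
  then show ?thesis using T t1 t2 t2' t2'' main by linarith
qed

end


context kset begin

lemma etar_periodic: "etar ar br (x + of_int r) = etar ar br x"
proof -
  have "R0 n (x + of_int r - \<tau> k) = R0 n (x - \<tau> k)" for k
    using R0_periodic[of n "x - \<tau> k" r] by (simp add: algebra_simps)
  moreover have "R1 n (x + of_int r - \<tau> k) = R1 n (x - \<tau> k)" for k
    using R1_periodic[of n "x - \<tau> k" r] by (simp add: algebra_simps)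
  ultimately show ?thesis unfolding etar_def by simp
qed

lemma global:
  assumes h: "hyp ar br"
  shows "\<bar>etar ar br \<theta>\<bar> \<le> 1"
proof -
  let ?D = "(\<lambda>k. abs_mod1 (\<theta> - \<tau> k)) ` {..<m}"
  have "0 \<in> {..<m}" using m1 by simp
  then have ne: "?D \<noteq> {}" by blast
  have "Min ?D \<in> ?D" using ne by (intro Min_in) auto
  then obtain j where j: "j < m" "Min ?D = abs_mod1 (\<theta> - \<tau> j)" by auto
  have mn: "abs_mod1 (\<theta> - \<tau> j) \<le> abs_mod1 (\<theta> - \<tau> k)" if "k < m" for k
    using j(2) that by (metis Min_le finite_imageI finite_lessThan imageI lessThan_iff)
  show ?thesis
  proof (cases "abs_mod1 (\<theta> - \<tau> j) \<ge> w")
    case True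
    show ?thesis by (rule far_bound[OF h j(1) mn True])
  next
    case False
    define r where "r = round (\<theta> - \<tau> j)"
    define s where "s = (\<theta> - \<tau> j) - of_int r"
    have th: "\<theta> = (\<tau> j + s) + of_int r" unfolding s_def by simp
    have sw: "\<bar>s\<bar> \<le> w" using False unfolding s_def r_def am_eq by simp
    have "etar ar br \<theta> = etar ar br (\<tau> j + s)" by (subst th, rule etar_periodic)
    moreover have "etar ar br (\<tau> j + s) \<le> 1" by (rule near_upper[OF h j(1) sw])
    moreover have "etar ar br (\<tau> j + s) \<ge> -1" by (rule near_lower[OF h j(1) sw])
    ultimately show ?thesis by simp
  qed
qed

lemma sum_of_real_mult:
  "(\<Sum>k<m. complex_of_real (p k) * complex_of_real (x k)) = complex_of_real (\<Sum>k<m. p k * x k)"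
  by simp

lemma sol_to_hyp:
  fixes a b :: "complex vec"
  assumes a: "a \<in> carrier_vec m" and b: "b \<in> carrier_vec m"
    and eq: "MM n m \<tau> *\<^sub>v (a @\<^sub>v (complex_of_real (sqrt (cmod (dirichlet2 n 0))) \<cdot>\<^sub>v b)) = vec m (\<lambda>_. 1) @\<^sub>v 0\<^sub>v m"
  shows "hyp (\<lambda>k. Re (a $ k)) (\<lambda>k. Re (b $ k))"
    "\<And>k. k < m \<Longrightarrow> a $ k = complex_of_real (Re (a $ k))"
    "\<And>k. k < m \<Longrightarrow> b $ k = complex_of_real (Re (b $ k))"
proof -
  let ?c = "cc n"
  let ?s = "sqrt (cc n)"
  have s0: "?s > 0" and c0: "?c > 0" and s3: "?s \<ge> 3 * real n" using c_facts by auto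
  have S: "sysE m (pc n \<tau>) (qc n \<tau>) (pc' n \<tau>) (qc' n \<tau>) (\<lambda>k. a $ k) (\<lambda>k. complex_of_real ?s * b $ k) (\<lambda>_. 1) (\<lambda>_. 0)"
    by (rule MM_sol_sys[OF a b eq])
  have g: "goodc m (pc n \<tau>) (qc n \<tau>) (pc' n \<tau>) (qc' n \<tau>) (13 * e)" by (rule goodc_holds)
  have sg0: "13 * e \<ge> 0" using e_nonneg by simp
  have sg1: "13 * e \<le> 1/4" using e_small by simp
  have S': "sysE m (pc n \<tau>) (qc n \<tau>) (pc' n \<tau>) (qc' n \<tau>) (\<lambda>k. a $ k) (\<lambda>k. complex_of_real ?s * b $ k)
      (\<lambda>j. complex_of_real 1) (\<lambda>j. complex_of_real 0)" using S by simp
  have R: "a $ k = complex_of_real (Re (a $ k)) \<and> complex_of_real ?s * b $ k = complex_of_real (Re (complex_of_real ?s * b $ k))"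
    if "k < m" for k by (rule real_sol[OF g sg0 sg1 m1 S' that])
  have B: "cmod (a $ k - 1) \<le> 4 * (13 * e) \<and> cmod (complex_of_real ?s * b $ k) \<le> 4 * (13 * e)"
    if "k < m" for k by (rule sol_bound[OF g sg0 sg1 m1 S that])
  show ar: "a $ k = complex_of_real (Re (a $ k))" if "k < m" for k using R[OF that] by simp
  show br: "b $ k = complex_of_real (Re (b $ k))" if "k < m" for k
  proof -
    have "Im (complex_of_real ?s * b $ k) = 0" using R[OF that] by (metis Im_complex_of_real)
    then have "Im (b $ k) = 0" using s0 by simp
    then show ?thesis by (simp add: complex_eq_iff)
  qed
  define ar where "ar k = Re (a $ k)" for k
  define br where "br k = Re (b $ k)" for k
  have cf1: "\<bar>ar k - 1\<bar> \<le> 52 * e" if "k < m" for k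
  proof -
    have "\<bar>ar k - 1\<bar> = \<bar>Re (a $ k - 1)\<bar>" unfolding ar_def by simp
    also have "\<dots> \<le> cmod (a $ k - 1)" by (rule abs_Re_le_cmod)
    finally show ?thesis using B[OF that] by simp
  qed
  have cf2: "\<bar>br k\<bar> \<le> 52 * e / (3 * real n)" if "k < m" for k
  proof -
    have "cmod (complex_of_real ?s * b $ k) = ?s * \<bar>br k\<bar>"
      using br[OF that] s0 unfolding br_def by (metis abs_of_pos norm_mult norm_of_real)
    then have "?s * \<bar>br k\<bar> \<le> 52 * e" using B[OF that] by simp
    moreover have "3 * real n * \<bar>br k\<bar> \<le> ?s * \<bar>br k\<bar>" using s3 by (intro mult_right_mono) auto
    ultimately have "(3 * real n) * \<bar>br k\<bar> \<le> 52 * e" by linarith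
    then show ?thesis using n_pos by (simp add: field_simps)
  qed
  have eqs: "etar ar br (\<tau> j) = 1 \<and> eta1 ar br (\<tau> j) = 0" if j: "j < m" for j
  proof -
    have e1: "(\<Sum>k<m. of_real (pc n \<tau> j k) * a $ k) + (\<Sum>k<m. of_real (qc n \<tau> j k) * (complex_of_real ?s * b $ k)) = 1"
     and e2: "(\<Sum>k<m. of_real (pc' n \<tau> j k) * a $ k) + (\<Sum>k<m. of_real (qc' n \<tau> j k) * (complex_of_real ?s * b $ k)) = 0"
      using S j unfolding sysE_def by auto
    have x1: "(\<Sum>k<m. of_real (pc n \<tau> j k) * a $ k) = of_real (\<Sum>k<m. ar k * R0 n (\<tau> j - \<tau> k))"
    proof -
      have "(\<Sum>k<m. of_real (pc n \<tau> j k) * a $ k) = (\<Sum>k<m. of_real (ar k * R0 n (\<tau> j - \<tau> k)))"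
      proof (rule sum.cong)
        fix k assume "k \<in> {..<m}"
        then have "a $ k = of_real (ar k)" using ar unfolding ar_def by auto
        then show "of_real (pc n \<tau> j k) * a $ k = of_real (ar k * R0 n (\<tau> j - \<tau> k))"
          unfolding pc_def by simp
      qed simp
      then show ?thesis by simp
    qed
    have x2: "(\<Sum>k<m. of_real (qc n \<tau> j k) * (complex_of_real ?s * b $ k)) = of_real (\<Sum>k<m. br k * R1 n (\<tau> j - \<tau> k))"
    proof -
      have "(\<Sum>k<m. of_real (qc n \<tau> j k) * (complex_of_real ?s * b $ k)) = (\<Sum>k<m. of_real (br k * R1 n (\<tau> j - \<tau> k)))"
      proof (rule sum.cong)
        fix k assume "k \<in> {..<m}"
        then have "b $ k = of_real (br k)" using br unfolding br_def by auto
        then show "of_real (qc n \<tau> j k) * (complex_of_real ?s * b $ k) = of_real (br k * R1 n (\<tau> j - \<tau> k))"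
          unfolding qc_def using s0 by (simp add: field_simps)
      qed simp
      then show ?thesis by simp
    qed
    have x3: "(\<Sum>k<m. of_real (pc' n \<tau> j k) * a $ k) = of_real (- (\<Sum>k<m. ar k * R1 n (\<tau> j - \<tau> k)) / ?s)"
    proof -
      have "(\<Sum>k<m. of_real (pc' n \<tau> j k) * a $ k) = (\<Sum>k<m. of_real (- (ar k * R1 n (\<tau> j - \<tau> k)) / ?s))"
      proof (rule sum.cong)
        fix k assume "k \<in> {..<m}"
        then have "a $ k = of_real (ar k)" using ar unfolding ar_def by auto
        then show "of_real (pc' n \<tau> j k) * a $ k = of_real (- (ar k * R1 n (\<tau> j - \<tau> k)) / ?s)"
          unfolding pc'_def by (simp add: field_simps)
      qed simp
      also have "\<dots> = of_real (- (\<Sum>k<m. ar k * R1 n (\<tau> j - \<tau> k)) / ?s)"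
        by (simp add: sum_divide_distrib sum_negf)
      finally show ?thesis .
    qed
    have x4: "(\<Sum>k<m. of_real (qc' n \<tau> j k) * (complex_of_real ?s * b $ k)) = of_real (- (\<Sum>k<m. br k * R2 n (\<tau> j - \<tau> k)) / ?s)"
    proof -
      have "(\<Sum>k<m. of_real (qc' n \<tau> j k) * (complex_of_real ?s * b $ k)) = (\<Sum>k<m. of_real (- (br k * R2 n (\<tau> j - \<tau> k)) / ?s))"
      proof (rule sum.cong)
        fix k assume "k \<in> {..<m}"
        then have "b $ k = of_real (br k)" using br unfolding br_def by auto
        moreover have "complex_of_real ?s * complex_of_real ?s = complex_of_real ?c"
          using c0 by (simp flip: of_real_mult)
        ultimately show "of_real (qc' n \<tau> j k) * (complex_of_real ?s * b $ k) = of_real (- (br k * R2 n (\<tau> j - \<tau> k)) / ?s)"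
          unfolding qc'_def using s0 c0 by (simp add: field_simps)
      qed simp
      also have "\<dots> = of_real (- (\<Sum>k<m. br k * R2 n (\<tau> j - \<tau> k)) / ?s)"
        by (simp add: sum_divide_distrib sum_negf)
      finally show ?thesis .
    qed
    have "of_real (etar ar br (\<tau> j)) = (1::complex)" using e1 x1 x2 unfolding etar_def by simp
    then have E1: "etar ar br (\<tau> j) = 1" by (metis of_real_eq_1_iff)
    have "of_real (- (\<Sum>k<m. ar k * R1 n (\<tau> j - \<tau> k)) / ?s + - (\<Sum>k<m. br k * R2 n (\<tau> j - \<tau> k)) / ?s) = (0::complex)"
      using e2 x3 x4 by simp
    then have "- (\<Sum>k<m. ar k * R1 n (\<tau> j - \<tau> k)) / ?s + - (\<Sum>k<m. br k * R2 n (\<tau> j - \<tau> k)) / ?s = 0"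
      by (metis of_real_eq_0_iff)
    then have "- eta1 ar br (\<tau> j) / ?s = 0" unfolding eta1_def using s0 by (simp add: field_simps)
    then have E2: "eta1 ar br (\<tau> j) = 0" using s0 by simp
    show ?thesis using E1 E2 by simp
  qed
  show "hyp (\<lambda>k. Re (a $ k)) (\<lambda>k. Re (b $ k))"
    unfolding hyp_def using cf1 cf2 eqs unfolding ar_def br_def by auto
qed

end


theorem lemma4p1:
  "\<exists>C>0. \<forall>(n::nat) (m::nat) (\<tau>::nat \<Rightarrow> real).
     n \<ge> 1 \<and> m \<ge> 1 \<and> inj_on \<tau> {..<m} \<and> (\<forall>j<m. 0 \<le> \<tau> j \<and> \<tau> j < 1) \<and>
     (\<forall>j<m. \<forall>k<m. j \<noteq> k \<longrightarrow> abs_mod1 (\<tau> j - \<tau> k) \<ge> C * (1 / real n) * ln (real m))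
     \<longrightarrow>
     (let c = cmod (dirichlet2 n 0);
          M = four_block_mat (kmat (dirichlet n) m \<tau>)
                ((complex_of_real (1 / sqrt c)) \<cdot>\<^sub>m kmat (dirichlet1 n) m \<tau>)
                ((- complex_of_real (1 / sqrt c)) \<cdot>\<^sub>m kmat (dirichlet1 n) m \<tau>)
                ((- complex_of_real (1 / c)) \<cdot>\<^sub>m kmat (dirichlet2 n) m \<tau>);
          sys = (\<lambda>a b. a \<in> carrier_vec m \<and> b \<in> carrier_vec m \<and>
                   M *\<^sub>v (a @\<^sub>v (complex_of_real (sqrt c) \<cdot>\<^sub>v b))
                     = vec m (\<lambda>_. 1) @\<^sub>v 0\<^sub>v m)
      in invertible_mat M \<and>
         (\<exists>!ab. sys (fst ab) (snd ab)) \<and>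
         (\<forall>a b. sys a b \<longrightarrow>
            (let \<eta> = (\<lambda>\<theta>. (\<Sum>k<m. a $ k * dirichlet n (\<theta> - \<tau> k))
                            + (\<Sum>k<m. b $ k * dirichlet1 n (\<theta> - \<tau> k)))
             in (\<forall>\<theta>\<in>{0..1}. cmod (\<eta> \<theta>) \<le> 1) \<and> (\<forall>j<m. \<eta> (\<tau> j) = 1))))"
proof (intro exI[of _ "10^6"] conjI allI impI)
  show "(10::real)^6 > 0" by simp
next
  fix n m :: nat and \<tau> :: "nat \<Rightarrow> real"
  assume H: "n \<ge> 1 \<and> m \<ge> 1 \<and> inj_on \<tau> {..<m} \<and> (\<forall>j<m. 0 \<le> \<tau> j \<and> \<tau> j < 1) \<and>
     (\<forall>j<m. \<forall>k<m. j \<noteq> k \<longrightarrow> abs_mod1 (\<tau> j - \<tau> k) \<ge> 10^6 * (1 / real n) * ln (real m))"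
  interpret K: kset n m \<tau> by unfold_locales (use H in auto)
  have g: "goodc m (pc n \<tau>) (qc n \<tau>) (pc' n \<tau>) (qc' n \<tau>) (13 * K.e)" by (rule K.goodc_holds)
  have sg0: "13 * K.e \<ge> 0" using K.e_nonneg by simp
  have sg1: "13 * K.e \<le> 1/4" using K.e_small by simp
  have inv: "invertible_mat (MM n m \<tau>)" by (rule MM_invertible[OF K.n1 K.m1 g sg0 sg1])
  have uniq: "\<exists>!ab. fst ab \<in> carrier_vec m \<and> snd ab \<in> carrier_vec m \<and>
      MM n m \<tau> *\<^sub>v (fst ab @\<^sub>v (complex_of_real (sqrt (cmod (dirichlet2 n 0))) \<cdot>\<^sub>v snd ab))
        = vec m (\<lambda>_. 1) @\<^sub>v 0\<^sub>v m" by (rule MM_solution[OF K.n1 K.m1 g sg0 sg1])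
  have eta: "(\<forall>\<theta>\<in>{0..1}. cmod ((\<Sum>k<m. a $ k * dirichlet n (\<theta> - \<tau> k)) + (\<Sum>k<m. b $ k * dirichlet1 n (\<theta> - \<tau> k))) \<le> 1) \<and>
             (\<forall>j<m. (\<Sum>k<m. a $ k * dirichlet n (\<tau> j - \<tau> k)) + (\<Sum>k<m. b $ k * dirichlet1 n (\<tau> j - \<tau> k)) = 1)"
    if a: "a \<in> carrier_vec m" and b: "b \<in> carrier_vec m"
      and eq: "MM n m \<tau> *\<^sub>v (a @\<^sub>v (complex_of_real (sqrt (cmod (dirichlet2 n 0))) \<cdot>\<^sub>v b)) = vec m (\<lambda>_. 1) @\<^sub>v 0\<^sub>v m"
    for a b :: "complex vec"
  proof -
    note SH = K.sol_to_hyp[OF a b eq]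
    have ev: "(\<Sum>k<m. a $ k * dirichlet n (\<theta> - \<tau> k)) + (\<Sum>k<m. b $ k * dirichlet1 n (\<theta> - \<tau> k))
        = of_real (K.etar (\<lambda>k. Re (a $ k)) (\<lambda>k. Re (b $ k)) \<theta>)" for \<theta>
    proof -
      have "(\<Sum>k<m. a $ k * dirichlet n (\<theta> - \<tau> k)) = (\<Sum>k<m. of_real (Re (a $ k) * R0 n (\<theta> - \<tau> k)))"
      proof (rule sum.cong)
        fix k assume "k \<in> {..<m}"
        then have "a $ k = of_real (Re (a $ k))" using SH(2) by auto
        then show "a $ k * dirichlet n (\<theta> - \<tau> k) = of_real (Re (a $ k) * R0 n (\<theta> - \<tau> k))"
          by (simp add: dirichlet_R0)
      qed simp
      moreover have "(\<Sum>k<m. b $ k * dirichlet1 n (\<theta> - \<tau> k)) = (\<Sum>k<m. of_real (Re (b $ k) * R1 n (\<theta> - \<tau> k)))"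
      proof (rule sum.cong)
        fix k assume "k \<in> {..<m}"
        then have "b $ k = of_real (Re (b $ k))" using SH(3) by auto
        then show "b $ k * dirichlet1 n (\<theta> - \<tau> k) = of_real (Re (b $ k) * R1 n (\<theta> - \<tau> k))"
          by (simp add: dirichlet1_R1)
      qed simp
      ultimately show ?thesis unfolding K.etar_def by simp
    qed
    show ?thesis
    proof
      show "\<forall>\<theta>\<in>{0..1}. cmod ((\<Sum>k<m. a $ k * dirichlet n (\<theta> - \<tau> k)) + (\<Sum>k<m. b $ k * dirichlet1 n (\<theta> - \<tau> k))) \<le> 1"
        unfolding ev using K.global[OF SH(1)] by simp
      show "\<forall>j<m. (\<Sum>k<m. a $ k * dirichlet n (\<tau> j - \<tau> k)) + (\<Sum>k<m. b $ k * dirichlet1 n (\<tau> j - \<tau> k)) = 1"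
        unfolding ev using K.hyp_eq(1)[OF SH(1)] by simp
    qed
  qed
  show "let c = cmod (dirichlet2 n 0);
          M = four_block_mat (kmat (dirichlet n) m \<tau>)
                ((complex_of_real (1 / sqrt c)) \<cdot>\<^sub>m kmat (dirichlet1 n) m \<tau>)
                ((- complex_of_real (1 / sqrt c)) \<cdot>\<^sub>m kmat (dirichlet1 n) m \<tau>)
                ((- complex_of_real (1 / c)) \<cdot>\<^sub>m kmat (dirichlet2 n) m \<tau>);
          sys = (\<lambda>a b. a \<in> carrier_vec m \<and> b \<in> carrier_vec m \<and>
                   M *\<^sub>v (a @\<^sub>v (complex_of_real (sqrt c) \<cdot>\<^sub>v b))
                     = vec m (\<lambda>_. 1) @\<^sub>v 0\<^sub>v m)
      in invertible_mat M \<and>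
         (\<exists>!ab. sys (fst ab) (snd ab)) \<and>
         (\<forall>a b. sys a b \<longrightarrow>
            (let \<eta> = (\<lambda>\<theta>. (\<Sum>k<m. a $ k * dirichlet n (\<theta> - \<tau> k))
                            + (\<Sum>k<m. b $ k * dirichlet1 n (\<theta> - \<tau> k)))
             in (\<forall>\<theta>\<in>{0..1}. cmod (\<eta> \<theta>) \<le> 1) \<and> (\<forall>j<m. \<eta> (\<tau> j) = 1)))"
    unfolding Let_def MM_def[symmetric] using inv uniq eta by blast
qed


end
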